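(* Let $\mathcal{H}_A,\mathcal{H}_B$ be finite-dimensional Hilbert spaces, $M_A,M_B$ Hermitian operators on $\mathcal{H}_A,\mathcal{H}_B$, and $M_{AB}=M_A\otimes1_B+1_A\otimes M_B$. Let $U$ be a unitary on $\mathcal{H}_A\otimes\mathcal{H}_B$ with $[M_{AB},U]=0$, and let $|\phi\rangle_B$ be a unit eigenvector of $M_B$ belonging to its maximal or its minimal eigenvalue, this eigenvalue being non-degenerate. Define the quantum channel $\tau$ on $\mathcal{H}_A$ by $\tau(\rho)=\mathrm{Tr}_B\big[U(\rho\otimes|\phi\rangle_B\langle\phi|)U^{\dagger}\big]$. Then $\tau$ is mixing if and only if $U$ has exactly one eigenvector, up to nonzero scalar multiples, of the product form $|\nu\rangle_A\otimes|\phi\rangle_B$.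
   Context: $\mathrm{Tr}_B$ is the partial trace over $\mathcal{H}_B$. A quantum channel $\tau$ on $\mathcal{H}_A$ is mixing if there is a density matrix $\rho_*$ with $\tau^n(\rho)\to\rho_*$ for every density matrix $\rho$ on $\mathcal{H}_A$. *)

theory Defs
  imports "HOL-Analysis.Analysis"
begin

text \<open>Finite-dimensional Hilbert spaces are modelled as complex^'n for a finite index type 'n;
  operators as complex^'n^'n. The tensor product H_A \<otimes> H_B is indexed by 'a \<times> 'b.\<close>

definition ctrans :: "complex^'n^'m \<Rightarrow> complex^'m^'n" where
  "ctrans A = (\<chi> i j. cnj (A $ j $ i))"

definition hermitian :: "complex^'n^'n \<Rightarrow> bool" where
  "hermitian A \<longleftrightarrow> ctrans A = A"

definition unitary :: "complex^'n^'n \<Rightarrow> bool" where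
  "unitary U \<longleftrightarrow> U ** ctrans U = mat 1 \<and> ctrans U ** U = mat 1"

definition kron :: "complex^'a::finite^'a \<Rightarrow> complex^'b::finite^'b \<Rightarrow> complex^('a \<times> 'b)^('a \<times> 'b)" where
  "kron A B = (\<chi> p q. A $ fst p $ fst q * B $ snd p $ snd q)"

definition vkron :: "complex^'a::finite \<Rightarrow> complex^'b::finite \<Rightarrow> complex^('a \<times> 'b)" where
  "vkron v w = (\<chi> p. v $ fst p * w $ snd p)"

text \<open>|v><w|\<close>
definition outer :: "complex^'n \<Rightarrow> complex^'n \<Rightarrow> complex^'n^'n" where
  "outer v w = (\<chi> i j. v $ i * cnj (w $ j))"

text \<open>Partial trace over the second factor H_B.\<close>
definition ptrace_B :: "complex^('a::finite \<times> 'b::finite)^('a \<times> 'b) \<Rightarrow> complex^'a^'a" where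
  "ptrace_B X = (\<chi> i j. \<Sum>k\<in>UNIV. X $ (i, k) $ (j, k))"

text \<open>Sesquilinear form <x|A|x>.\<close>
definition qform :: "complex^'n^'n \<Rightarrow> complex^'n \<Rightarrow> complex" where
  "qform A x = (\<Sum>i\<in>UNIV. cnj (x $ i) * (A *v x) $ i)"

definition density :: "complex^'n^'n \<Rightarrow> bool" where
  "density \<rho> \<longleftrightarrow> hermitian \<rho> \<and> (\<forall>x. 0 \<le> Re (qform \<rho> x)) \<and> trace \<rho> = 1"

definition mixing :: "(complex^'n^'n \<Rightarrow> complex^'n^'n) \<Rightarrow> bool" where
  "mixing \<tau> \<longleftrightarrow> (\<exists>\<rho>s. density \<rho>s \<and>
      (\<forall>\<rho>. density \<rho> \<longrightarrow> (\<lambda>n. (\<tau> ^^ n) \<rho>) \<longlonglongrightarrow> \<rho>s))"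

definition is_eigenvalue :: "complex^'n^'n \<Rightarrow> complex \<Rightarrow> bool" where
  "is_eigenvalue M \<mu> \<longleftrightarrow> (\<exists>v. v \<noteq> 0 \<and> M *v v = \<mu> *s v)"

definition is_eigenvector :: "complex^'n^'n \<Rightarrow> complex^'n \<Rightarrow> bool" where
  "is_eigenvector M v \<longleftrightarrow> v \<noteq> 0 \<and> (\<exists>\<mu>. M *v v = \<mu> *s v)"

end

theory Submission
  imports Defs "HOL-Computational_Algebra.Fundamental_Theorem_Algebra"
begin


definition cinner :: "complex^'n \<Rightarrow> complex^'n \<Rightarrow> complex" where
  "cinner x y = (\<Sum>i\<in>UNIV. cnj (x$i) * y$i)"

lemma cinner_add_right: "cinner x (y + z) = cinner x y + cinner x z"
  by (simp add: cinner_def algebra_simps sum.distrib)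
lemma cinner_add_left: "cinner (x + y) z = cinner x z + cinner y z"
  by (simp add: cinner_def algebra_simps sum.distrib)
lemma cinner_diff_right: "cinner x (y - z) = cinner x y - cinner x z"
  by (simp add: cinner_def algebra_simps sum_subtractf)
lemma cinner_diff_left: "cinner (x - y) z = cinner x z - cinner y z"
  by (simp add: cinner_def algebra_simps sum_subtractf)
lemma cinner_scale_right: "cinner x (c *s y) = c * cinner x y"
  by (simp add: cinner_def sum_distrib_left algebra_simps)
lemma cinner_scale_left: "cinner (c *s x) y = cnj c * cinner x y"
  by (simp add: cinner_def sum_distrib_left algebra_simps)
lemma cinner_zero_right[simp]: "cinner x 0 = 0"
  by (simp add: cinner_def)
lemma cinner_zero_left[simp]: "cinner 0 x = 0"
  by (simp add: cinner_def)
lemma cinner_sum_right: "cinner x (\<Sum>g\<in>F. f g) = (\<Sum>g\<in>F. cinner x (f g))"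
  by (induction F rule: infinite_finite_induct) (auto simp: cinner_add_right)
lemma cinner_sum_left: "cinner (\<Sum>g\<in>F. f g) x = (\<Sum>g\<in>F. cinner (f g) x)"
  by (induction F rule: infinite_finite_induct) (auto simp: cinner_add_left)
lemma cinner_commute: "cinner y x = cnj (cinner x y)"
  by (simp add: cinner_def mult.commute)

lemma cinner_self: "cinner x x = of_real ((norm x)^2)"
proof -
  have "cinner x x = (\<Sum>i\<in>UNIV. of_real ((norm (x$i))^2))"
    unfolding cinner_def by (intro sum.cong refl) (metis complex_norm_square mult.commute of_real_power)
  also have "\<dots> = of_real (\<Sum>i\<in>UNIV. (norm (x$i))^2)" by simp
  also have "(\<Sum>i\<in>UNIV. (norm (x$i))^2) = (norm x)^2"
    unfolding norm_vec_def L2_set_def by (simp add: sum_nonneg)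
  finally show ?thesis .
qed

lemma cinner_self_eq_0[simp]: "cinner x x = 0 \<longleftrightarrow> x = 0"
  by (simp add: cinner_self)

lemma Re_cinner_self: "Re (cinner x x) = (norm x)^2"
  by (simp add: cinner_self)
lemma Im_cinner_self[simp]: "Im (cinner x x) = 0"
  by (simp add: cinner_self)

lemma cinner_matrix: "cinner (A *v x) y = cinner x (ctrans A *v y)"
proof -
  have "cinner (A *v x) y = (\<Sum>i\<in>UNIV. \<Sum>j\<in>UNIV. cnj (A$i$j) * cnj (x$j) * y$i)"
    unfolding cinner_def matrix_vector_mult_def
    by (auto simp: sum_distrib_right intro!: sum.cong)
  also have "\<dots> = (\<Sum>j\<in>UNIV. \<Sum>i\<in>UNIV. cnj (A$i$j) * cnj (x$j) * y$i)"
    by (rule sum.swap)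
  also have "\<dots> = cinner x (ctrans A *v y)"
    unfolding cinner_def matrix_vector_mult_def ctrans_def
    by (auto simp: sum_distrib_left intro!: sum.cong)
  finally show ?thesis .
qed

lemma ctrans_ctrans[simp]: "ctrans (ctrans A) = A"
  by (simp add: ctrans_def vec_eq_iff)

lemma cinner_matrix_right: "cinner x (A *v y) = cinner (ctrans A *v x) y"
  by (simp add: cinner_matrix)

lemma herm_cinner: "hermitian H \<Longrightarrow> cinner (H *v x) y = cinner x (H *v y)"
  by (simp add: hermitian_def cinner_matrix)

lemma herm_real: "hermitian H \<Longrightarrow> Im (cinner x (H *v x)) = 0"
  by (metis cinner_commute cnj.sel(2) herm_cinner neg_equal_zero)

lemma unitary_cinner: "unitary U \<Longrightarrow> cinner (U *v x) (U *v y) = cinner x y"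
  by (simp add: unitary_def cinner_matrix matrix_vector_mul_assoc)

lemma unitary_norm: assumes "unitary U" shows "norm (U *v x) = norm x"
proof -
  have "(norm (U *v x))^2 = (norm x)^2" using unitary_cinner[OF assms, of x x]
    by (metis cinner_self of_real_eq_iff)
  then show ?thesis by (simp add: power2_eq_iff_nonneg)
qed

lemma unitary_inv: "unitary U \<Longrightarrow> ctrans U *v (U *v x) = x"
  by (simp add: unitary_def matrix_vector_mul_assoc)

lemma unitary_eig_adj:
  assumes "unitary U" "U *v e = \<mu> *s e" "e \<noteq> 0"
  shows "ctrans U *v e = cnj \<mu> *s e"
proof -
  have n: "norm (\<mu> *s e) = norm e" using unitary_norm[OF assms(1), of e] assms(2) by simp
  have "norm (\<mu> *s e) = norm \<mu> * norm e"
    by (simp add: norm_vec_def L2_set_def norm_mult power_mult_distrib sum_distrib_left[symmetric] real_sqrt_mult)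
  with n assms(3) have m: "norm \<mu> = 1" by simp
  have "e = ctrans U *v (U *v e)" using unitary_inv[OF assms(1)] by simp
  also have "\<dots> = \<mu> *s (ctrans U *v e)" using assms(2) by (simp add: vec.scale)
  finally have "cnj \<mu> *s e = (cnj \<mu> * \<mu>) *s (ctrans U *v e)" by (metis vector_smult_assoc)
  moreover have "cnj \<mu> * \<mu> = 1" using m
    by (metis complex_norm_square mult.commute of_real_1 power_one)
  ultimately show ?thesis by simp
qed



definition pev :: "complex poly \<Rightarrow> complex^'n^'n \<Rightarrow> complex^'n \<Rightarrow> complex^'n" where
  "pev p U x = (\<Sum>k\<le>degree p. coeff p k *s (((*v) U) ^^ k) x)"

lemma pev_bound:
  assumes "degree p \<le> n"
  shows "pev p U x = (\<Sum>k\<le>n. coeff p k *s (((*v) U) ^^ k) x)"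
  unfolding pev_def
  by (rule sum.mono_neutral_left) (use assms in \<open>auto simp: coeff_eq_0\<close>)

lemma pev_add: "pev (p + q) U x = pev p U x + pev q U x"
proof -
  define n where "n = max (degree p) (degree q)"
  have "degree (p + q) \<le> n" unfolding n_def by (rule degree_add_le) auto
  then have "pev (p+q) U x = (\<Sum>k\<le>n. coeff (p+q) k *s (((*v) U) ^^ k) x)" by (rule pev_bound)
  also have "\<dots> = (\<Sum>k\<le>n. coeff p k *s (((*v) U) ^^ k) x) + (\<Sum>k\<le>n. coeff q k *s (((*v) U) ^^ k) x)"
    by (simp add: sum.distrib vector_sadd_rdistrib)
  also have "\<dots> = pev p U x + pev q U x"
    by (subst (1 2) pev_bound[symmetric]) (auto simp: n_def)
  finally show ?thesis .
qed

lemma pev_smult: "pev (smult c p) U x = c *s pev p U x"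
proof -
  have "pev (smult c p) U x = (\<Sum>k\<le>degree p. coeff (smult c p) k *s (((*v) U) ^^ k) x)"
    by (rule pev_bound) simp
  also have "\<dots> = c *s pev p U x"
    by (simp add: pev_def vec.scale_sum_right vector_smult_assoc)
  finally show ?thesis .
qed

lemma pev_shift: "pev (pCons 0 p) U x = U *v pev p U x"
proof -
  have "pev (pCons 0 p) U x = (\<Sum>k\<le>Suc (degree p). coeff (pCons 0 p) k *s (((*v) U) ^^ k) x)"
    by (rule pev_bound) simp
  also have "\<dots> = (\<Sum>k\<le>degree p. coeff p k *s (((*v) U) ^^ Suc k) x)"
    by (subst sum.atMost_Suc_shift) simp
  also have "\<dots> = U *v pev p U x"
    by (simp add: pev_def vec.sum vec.scale)
  finally show ?thesis .
qed


lemma pev_monom: "pev (monom c i) U x = c *s (((*v) U) ^^ i) x"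
proof -
  have "pev (monom c i) U x = (\<Sum>k\<le>i. coeff (monom c i) k *s (((*v) U) ^^ k) x)"
    by (rule pev_bound) (rule degree_monom_le)
  also have "\<dots> = (\<Sum>k\<le>i. if k = i then c *s (((*v) U) ^^ k) x else 0)"
    by (intro sum.cong) auto
  also have "\<dots> = c *s (((*v) U) ^^ i) x"
    by simp
  finally show ?thesis .
qed

lemma pev_zero[simp]: "pev 0 U x = 0"
  by (simp add: pev_def)

lemma pev_sum: "pev (\<Sum>k\<in>A. f k) U x = (\<Sum>k\<in>A. pev (f k) U x)"
  by (induction A rule: infinite_finite_induct) (auto simp: pev_add)

lemma pev_minus: "pev (- p) U x = - pev p U x"
proof -
  have "pev p U x + pev (- p) U x = 0" by (simp flip: pev_add)
  then show ?thesis by (simp add: eq_neg_iff_add_eq_0 add.commute)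
qed

lemma pev_diff: "pev (p - q) U x = pev p U x - pev q U x"
  by (simp only: diff_conv_add_uminus pev_add pev_minus)

lemma pev_linfactor: "pev ([:-r, 1:] * q) U x = U *v pev q U x - r *s pev q U x"
  by (simp add: pev_diff pev_smult pev_shift)

lemma pev_const: "degree p = 0 \<Longrightarrow> pev p U x = coeff p 0 *s x"
  by (simp add: pev_def)

lemma pow_in:
  assumes "\<forall>y\<in>T. U *v y \<in> T" "x \<in> T"
  shows "(((*v) U) ^^ k) x \<in> T"
  using assms by (induction k) auto

lemma pev_in:
  assumes "vec.subspace T" "\<forall>y\<in>T. U *v y \<in> T" "x \<in> T"
  shows "pev p U x \<in> T"
  unfolding pev_def
  by (intro vec.subspace_sum[OF assms(1)] vec.subspace_scale[OF assms(1)] pow_in[OF assms(2,3)])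

lemma eig_from_poly:
  assumes "vec.subspace T" "\<forall>y\<in>T. U *v y \<in> T" "x \<in> T" "x \<noteq> 0"
    and "p \<noteq> 0" "pev p U x = 0"
  shows "\<exists>y\<in>T. y \<noteq> 0 \<and> (\<exists>\<mu>. U *v y = \<mu> *s y)"
  using assms(5,6)
proof (induction "degree p" arbitrary: p rule: less_induct)
  case less
  show ?case
  proof (cases "degree p = 0")
    case True
    then have "coeff p 0 \<noteq> 0" using less.prems(1) leading_coeff_0_iff by fastforce
    moreover have "coeff p 0 *s x = 0" using less.prems(2) pev_const[OF True, of U x] by simp
    ultimately show ?thesis using assms(4) by simp
  next
    case False
    then have "\<not> constant (poly p)" by (simp add: constant_degree)
    then obtain r where "poly p r = 0" using fundamental_theorem_of_algebra by blast
    then obtain q where pq: "p = [:-r, 1:] * q" using poly_eq_0_iff_dvd by (metis dvdE)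
    with less.prems(1) have q0: "q \<noteq> 0" by auto
    have h1: "[:-r, 1:] \<noteq> (0::complex poly)" by simp
    have h2: "degree [:-r, 1:] = (1::nat)" by simp
    have "degree p = 1 + degree q" using pq degree_mult_eq[OF h1 q0] h2 by (simp only:)
    then have dq: "degree q < degree p" by simp
    show ?thesis
    proof (cases "pev q U x = 0")
      case True
      then show ?thesis using less.hyps[OF dq q0] by blast
    next
      case False
      have "pev q U x \<in> T" by (rule pev_in[OF assms(1-3)])
      moreover have "U *v pev q U x = r *s pev q U x"
        using less.prems(2) pq pev_linfactor[of r q U x] by simp
      ultimately show ?thesis using False by blast
    qed
  qed
qed

lemma exists_annih: "\<exists>p. p \<noteq> 0 \<and> pev p U (x::complex^'n) = 0"
proof -
  define N where "N = CARD('n)"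
  define f where "f k = (((*v) U) ^^ k) x" for k
  show ?thesis
  proof (cases "inj_on f {..N}")
    case False
    then obtain i j where ij: "i \<noteq> j" "f i = f j" unfolding inj_on_def by blast
    let ?p = "monom (1::complex) i - monom 1 j"
    have "coeff ?p i = 1" using ij by simp
    then have "?p \<noteq> 0" by (metis coeff_0 zero_neq_one)
    moreover have "pev ?p U x = 0" using ij by (simp add: pev_diff pev_monom f_def)
    ultimately show ?thesis by blast
  next
    case True
    define S where "S = f ` {..N}"
    have cS: "card S = Suc N" using True by (simp add: S_def card_image)
    have "vec.dim S \<le> CARD('n)"
      using vec.dim_subset_UNIV[of S] by (simp add: vec.dimension_def card_cart_basis)
    then have "vec.dependent S"
      by (intro vec.dependent_biggerset_general) (simp add: cS N_def)
    moreover have "finite S" by (simp add: S_def)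
    ultimately obtain c where c: "(\<Sum>v\<in>S. c v *s v) = 0" "\<exists>v\<in>S. c v \<noteq> 0"
      using vec.independent_explicit by blast
    define p where "p = (\<Sum>k\<le>N. monom (c (f k)) k)"
    have "pev p U x = (\<Sum>k\<le>N. c (f k) *s f k)"
      by (simp add: p_def pev_sum pev_monom f_def)
    also have "\<dots> = (\<Sum>v\<in>S. c v *s v)"
      unfolding S_def by (simp add: sum.reindex[OF True] o_def)
    finally have ev: "pev p U x = 0" using c(1) by simp
    from c(2) obtain k where k: "k \<le> N" "c (f k) \<noteq> 0" unfolding S_def by auto
    have "coeff p k = c (f k)"
      using k(1) by (simp add: p_def coeff_sum)
    with k have "p \<noteq> 0" by auto
    with ev show ?thesis by blast
  qed
qed

lemma invariant_eigvec:
  fixes U :: "complex^'n^'n"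
  assumes "vec.subspace T" "\<forall>y\<in>T. U *v y \<in> T" "x \<in> T" "x \<noteq> 0"
  shows "\<exists>y\<in>T. y \<noteq> 0 \<and> (\<exists>\<mu>. U *v y = \<mu> *s y)"
  using exists_annih[of U x] eig_from_poly[OF assms] by blast



definition orthonormal :: "(complex^'n) set \<Rightarrow> bool" where
  "orthonormal F \<longleftrightarrow> (\<forall>g\<in>F. cinner g g = 1) \<and> (\<forall>g\<in>F. \<forall>h\<in>F. g \<noteq> h \<longrightarrow> cinner g h = 0)"

lemma orth_coeff:
  assumes "orthonormal F" "finite F" "h \<in> F"
  shows "cinner h (\<Sum>g\<in>F. b g *s g) = b h"
proof -
  have "cinner h (\<Sum>g\<in>F. b g *s g) = (\<Sum>g\<in>F. b g * cinner h g)"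
    by (simp add: cinner_sum_right cinner_scale_right)
  also have "\<dots> = (\<Sum>g\<in>F. if g = h then b g else 0)"
    using assms(1,3) unfolding orthonormal_def by (intro sum.cong) auto
  also have "\<dots> = b h" using assms(2,3) by simp
  finally show ?thesis .
qed

lemma orth_cinner_sums:
  assumes "orthonormal F" "finite F"
  shows "cinner (\<Sum>g\<in>F. a g *s g) (\<Sum>g\<in>F. b g *s g) = (\<Sum>g\<in>F. cnj (a g) * b g)"
  using orth_coeff[OF assms]
  by (simp add: cinner_sum_left cinner_scale_left)

lemma orthonormal_indep:
  assumes "orthonormal F"
  shows "vec.independent F"
proof
  assume "vec.dependent F"
  then obtain t u where tu: "finite t" "t \<subseteq> F" "(\<Sum>v\<in>t. u v *s v) = 0" "\<exists>v\<in>t. u v \<noteq> 0"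
    unfolding vec.dependent_explicit by blast
  have ot: "orthonormal t" using assms tu(2) unfolding orthonormal_def by blast
  from tu(4) obtain v where v: "v \<in> t" "u v \<noteq> 0" by blast
  have "cinner v (\<Sum>v\<in>t. u v *s v) = u v" by (rule orth_coeff[OF ot tu(1) v(1)])
  with tu(3) v(2) show False by simp
qed

lemma orthonormal_card:
  fixes F :: "(complex^'n) set"
  assumes "orthonormal F"
  shows "finite F \<and> card F \<le> CARD('n)"
proof -
  have "finite F \<and> card F \<le> vec.dim F"
    using vec.independent_bound_general[OF orthonormal_indep[OF assms]] .
  moreover have "vec.dim F \<le> CARD('n)"
    using vec.dim_subset_UNIV[of F] by (simp add: vec.dimension_def card_cart_basis)
  ultimately show ?thesis by linarith
qed

lemma cinner_normalize:
  assumes "e \<noteq> 0"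
  shows "cinner (of_real (1 / norm e) *s e) (of_real (1 / norm e) *s e) = 1"
proof -
  have "norm e \<noteq> 0" using assms by simp
  have "cinner (of_real (1 / norm e) *s e) (of_real (1 / norm e) *s e) = of_real (1 / norm e) * of_real (1 / norm e) * cinner e e"
    by (simp add: cinner_scale_left cinner_scale_right)
  also have "\<dots> = 1" using \<open>norm e \<noteq> 0\<close> by (simp add: cinner_self power2_eq_square)
  finally show ?thesis .
qed

theorem spectral:
  fixes H :: "complex^'n^'n"
  assumes herm: "hermitian H"
  shows "\<exists>F. finite F \<and> orthonormal F \<and>
     (\<forall>g\<in>F. H *v g = of_real (Re (cinner g (H *v g))) *s g) \<and>
     (\<forall>x. x = (\<Sum>g\<in>F. cinner g x *s g))"
proof -
  define P where "P F \<longleftrightarrow> orthonormal F \<and> (\<forall>g\<in>F. \<exists>\<mu>. H *v g = \<mu> *s g)" for F :: "(complex^'n) set"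
  have P0: "P {}" by (simp add: P_def orthonormal_def)
  have bnd: "\<forall>F. P F \<longrightarrow> card F < Suc CARD('n)"
    by (metis P_def orthonormal_card le_imp_less_Suc)
  obtain F where F: "P F" and Fmax: "\<And>G. P G \<Longrightarrow> card G \<le> card F"
    using Lattices_Big.ex_has_greatest_nat[of P "{}" card, OF P0 bnd] by blast
  have orth: "orthonormal F" and eig: "\<forall>g\<in>F. \<exists>\<mu>. H *v g = \<mu> *s g" using F by (auto simp: P_def)
  have fin: "finite F" using orthonormal_card[OF orth] by simp
  have exp: "x = (\<Sum>g\<in>F. cinner g x *s g)" for x
  proof (rule ccontr)
    assume ne: "x \<noteq> (\<Sum>g\<in>F. cinner g x *s g)"
    define w where "w = x - (\<Sum>g\<in>F. cinner g x *s g)"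
    define T where "T = {y. \<forall>g\<in>F. cinner g y = 0}"
    have sub: "vec.subspace T"
      unfolding T_def vec.subspace_def by (auto simp: cinner_add_right cinner_scale_right)
    have inv: "\<forall>y\<in>T. H *v y \<in> T"
    proof
      fix y assume "y \<in> T"
      show "H *v y \<in> T" unfolding T_def
      proof (intro CollectI ballI)
        fix g assume g: "g \<in> F"
        then obtain \<mu> where "H *v g = \<mu> *s g" using eig by blast
        then have "cinner g (H *v y) = cnj \<mu> * cinner g y"
          using herm_cinner[OF herm, of g y] by (simp add: cinner_scale_left)
        then show "cinner g (H *v y) = 0" using \<open>y \<in> T\<close> g by (simp add: T_def)
      qed
    qed
    have wT: "w \<in> T" unfolding T_def w_def
      using orth_coeff[OF orth fin] by (simp add: cinner_diff_right)
    have w0: "w \<noteq> 0" using ne by (simp add: w_def)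
    obtain e \<mu> where e: "e \<in> T" "e \<noteq> 0" "H *v e = \<mu> *s e"
      using invariant_eigvec[OF sub inv wT w0] by blast
    define e' where "e' = of_real (1 / norm e) *s e"
    have e'1: "cinner e' e' = 1" unfolding e'_def by (rule cinner_normalize[OF e(2)])
    have e'T: "e' \<in> T" unfolding e'_def by (rule vec.subspace_scale[OF sub e(1)])
    have e'H: "H *v e' = \<mu> *s e'" unfolding e'_def using e(3)
      by (simp add: vec.scale vector_smult_assoc mult.commute)
    have e'F: "e' \<notin> F" using e'T e'1 by (auto simp: T_def)
    have hT: "\<forall>h\<in>F. cinner h e' = 0" using e'T by (simp add: T_def)
    have hT': "\<forall>h\<in>F. cinner e' h = 0"
    proof
      fix h assume "h \<in> F"
      then have "cinner h e' = 0" using hT by blast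
      then show "cinner e' h = 0" by (metis cinner_commute complex_cnj_zero)
    qed
    have "orthonormal (insert e' F)"
      using orth e'1 hT hT' unfolding orthonormal_def by auto
    then have "P (insert e' F)" using eig e'H by (auto simp: P_def)
    then have "card (insert e' F) \<le> card F" by (rule Fmax)
    with fin e'F show False by simp
  qed
  have ev: "\<forall>g\<in>F. H *v g = of_real (Re (cinner g (H *v g))) *s g"
  proof
    fix g assume g: "g \<in> F"
    then obtain \<mu> where mu: "H *v g = \<mu> *s g" using eig by blast
    have "cinner g (H *v g) = \<mu>" using mu orth g by (simp add: cinner_scale_right orthonormal_def)
    moreover have "Im (cinner g (H *v g)) = 0" by (rule herm_real[OF herm])
    ultimately have "\<mu> = of_real (Re (cinner g (H *v g)))" by (simp add: complex_eq_iff)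
    with mu show "H *v g = of_real (Re (cinner g (H *v g))) *s g" by simp
  qed
  show ?thesis using fin orth ev exp by blast
qed



definition gram :: "'j set \<Rightarrow> ('j \<Rightarrow> real) \<Rightarrow> ('j \<Rightarrow> complex^'n) \<Rightarrow> complex^'n^'n" where
  "gram J w v = (\<Sum>j\<in>J. w j *\<^sub>R outer (v j) (v j))"

lemma qform_cinner: "qform A x = cinner x (A *v x)"
  by (simp add: qform_def cinner_def)

lemma gram_nth: "gram J w v $ i $ k = (\<Sum>j\<in>J. of_real (w j) * (v j $ i * cnj (v j $ k)))"
  unfolding gram_def by (simp only: sum_component vector_scaleR_component) (simp add: outer_def scaleR_conv_of_real)

lemma gram_mult: "gram J w v *v x = (\<Sum>j\<in>J. (of_real (w j) * cinner (v j) x) *s v j)"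
proof -
  have "(gram J w v *v x) $ i = (\<Sum>j\<in>J. (of_real (w j) * cinner (v j) x) *s v j) $ i" for i
  proof -
    have "(gram J w v *v x) $ i = (\<Sum>k\<in>UNIV. \<Sum>j\<in>J. of_real (w j) * (v j $ i * cnj (v j $ k)) * x $ k)"
      by (simp add: matrix_vector_mult_def gram_nth sum_distrib_right)
    also have "\<dots> = (\<Sum>j\<in>J. \<Sum>k\<in>UNIV. of_real (w j) * (v j $ i * cnj (v j $ k)) * x $ k)"
      by (rule sum.swap)
    also have "\<dots> = (\<Sum>j\<in>J. (of_real (w j) * cinner (v j) x) *s v j) $ i"
      by (simp add: sum_component cinner_def sum_distrib_left sum_distrib_right mult_ac)
    finally show ?thesis .
  qed
  then show ?thesis by (simp add: vec_eq_iff)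
qed

lemma gram_qform: "cinner x (gram J w v *v x) = of_real (\<Sum>j\<in>J. w j * (cmod (cinner (v j) x))^2)"
proof -
  have "cinner x (gram J w v *v x) = (\<Sum>j\<in>J. of_real (w j) * (cinner (v j) x * cinner x (v j)))"
    by (simp add: gram_mult cinner_sum_right cinner_scale_right mult_ac)
  also have "\<dots> = (\<Sum>j\<in>J. of_real (w j * (cmod (cinner (v j) x))^2))"
    by (intro sum.cong refl) (simp add: cinner_commute[of x] flip: complex_norm_square)
  finally show ?thesis by simp
qed

lemma gram_herm: "hermitian (gram J w v)"
  by (simp add: hermitian_def ctrans_def vec_eq_iff gram_nth mult_ac)

lemma gram_trace: "trace (gram J w v) = of_real (\<Sum>j\<in>J. w j * (norm (v j))^2)"
proof -
  have "trace (gram J w v) = (\<Sum>j\<in>J. of_real (w j) * cinner (v j) (v j))"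
    by (simp add: trace_def gram_nth cinner_def sum_distrib_left mult_ac sum.swap[of _ UNIV])
  also have "\<dots> = of_real (\<Sum>j\<in>J. w j * (norm (v j))^2)" by (simp add: cinner_self)
  finally show ?thesis .
qed

lemma gram_density:
  assumes "\<forall>j\<in>J. 0 \<le> w j" "(\<Sum>j\<in>J. w j * (norm (v j))^2) = 1"
  shows "density (gram J w v)"
  unfolding density_def
proof (intro conjI allI)
  show "hermitian (gram J w v)" by (rule gram_herm)
  show "trace (gram J w v) = 1" using assms(2) by (simp add: gram_trace)
  fix x
  show "0 \<le> Re (qform (gram J w v) x)"
    using assms(1) by (simp add: qform_cinner gram_qform sum_nonneg)
qed

lemma gram_kernel:
  assumes "finite J" "\<forall>j\<in>J. 0 \<le> w j" "gram J w v *v y = 0" "j \<in> J" "w j > 0"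
  shows "cinner (v j) y = 0"
proof -
  have "(\<Sum>j\<in>J. w j * (cmod (cinner (v j) y))^2) = 0"
    using gram_qform[of y J w v] assms(3) by (metis cinner_zero_right of_real_eq_0_iff)
  then have "\<forall>j\<in>J. w j * (cmod (cinner (v j) y))^2 = 0"
    using assms(1,2) by (subst sum_nonneg_eq_0_iff[symmetric]) auto
  with assms(4,5) show ?thesis by auto
qed

lemma spec_apply:
  assumes "orthonormal F" "finite F" "\<forall>x. x = (\<Sum>g\<in>F. cinner g x *s g)"
    "\<forall>g\<in>F. H *v g = of_real (ev g) *s g"
  shows "H *v x = (\<Sum>g\<in>F. (of_real (ev g) * cinner g x) *s g)"
proof -
  have "H *v x = H *v (\<Sum>g\<in>F. cinner g x *s g)" using assms(3) by metis
  also have "\<dots> = (\<Sum>g\<in>F. (of_real (ev g) * cinner g x) *s g)"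
    using assms(4) by (simp add: vec.sum vec.scale vector_smult_assoc mult.commute)
  finally show ?thesis .
qed

lemma density_decomp:
  fixes \<rho> :: "complex^'n^'n"
  assumes "density \<rho>"
  shows "\<exists>F p. finite F \<and> orthonormal F \<and> (\<forall>g\<in>F. 0 \<le> p g) \<and> \<rho> = gram F p id \<and>
     (\<Sum>g\<in>F. p g) = 1 \<and> (\<forall>g\<in>F. \<rho> *v g = of_real (p g) *s g) \<and> (\<forall>x. x = (\<Sum>g\<in>F. cinner g x *s g))"
proof -
  have herm: "hermitian \<rho>" and psd: "\<forall>x. 0 \<le> Re (qform \<rho> x)" and tr: "trace \<rho> = 1"
    using assms by (auto simp: density_def)
  obtain F where F: "finite F" "orthonormal F" "\<forall>g\<in>F. \<rho> *v g = of_real (Re (cinner g (\<rho> *v g))) *s g"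
      "\<forall>x. x = (\<Sum>g\<in>F. cinner g x *s g)"
    using spectral[OF herm] by blast
  define p where "p g = Re (cinner g (\<rho> *v g))" for g
  have p0: "\<forall>g\<in>F. 0 \<le> p g" using psd by (simp add: p_def qform_cinner)
  have eq: "\<rho> = gram F p id"
  proof (subst matrix_eq, intro allI)
    fix x
    show "\<rho> *v x = gram F p id *v x"
      using spec_apply[OF F(2,1,4) F(3)[folded p_def]] by (simp add: gram_mult)
  qed
  have n1: "\<forall>g\<in>F. (norm g)^2 = 1"
    using F(2) unfolding orthonormal_def by (metis Re_cinner_self one_complex.simps(1))
  have "of_real (\<Sum>g\<in>F. p g) = (1::complex)"
    using tr eq gram_trace[of F p id] n1 by simp
  then have s1: "(\<Sum>g\<in>F. p g) = 1" by (metis of_real_eq_1_iff)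
  have F3: "\<forall>g\<in>F. \<rho> *v g = of_real (p g) *s g" using F(3)[folded p_def] .
  show ?thesis
    by (rule exI[of _ F], rule exI[of _ p]) (use F(1,2,4) p0 eq s1 F3 in fast)
qed



definition slice :: "'b \<Rightarrow> complex^('a::finite \<times> 'b::finite) \<Rightarrow> complex^'a" where
  "slice k x = (\<chi> i. x $ (i, k))"
definition sliceA :: "'a \<Rightarrow> complex^('a::finite \<times> 'b::finite) \<Rightarrow> complex^'b" where
  "sliceA i x = (\<chi> k. x $ (i, k))"

definition chan :: "complex^('a::finite \<times> 'b::finite)^('a \<times> 'b) \<Rightarrow> complex^'b \<Rightarrow> complex^'a^'a \<Rightarrow> complex^'a^'a" where
  "chan U \<phi> \<rho> = ptrace_B (U ** kron \<rho> (outer \<phi> \<phi>) ** ctrans U)"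

definition energy :: "complex^'a^'a \<Rightarrow> complex^'a^'a \<Rightarrow> real" where
  "energy M \<rho> = Re (trace (M ** \<rho>))"

lemma sum_UNIV_prod: "(\<Sum>p\<in>(UNIV::('a::finite \<times> 'b::finite) set). f p) = (\<Sum>i\<in>UNIV. \<Sum>k\<in>UNIV. f (i, k))"
  by (simp add: sum.cartesian_product flip: UNIV_Times_UNIV)

lemma outer_mult: "outer u v *v x = cinner v x *s u"
  by (simp add: outer_def matrix_vector_mult_def cinner_def vec_eq_iff sum_distrib_left mult_ac)

lemma conj_outer: "A ** outer y y ** ctrans A = outer (A *v y) (A *v y)"
  by (simp add: matrix_eq outer_mult flip: matrix_vector_mul_assoc)
     (simp add: cinner_matrix vec.scale)

lemma kron_outer: "kron (outer v v) (outer w w) = outer (vkron v w) (vkron v w)"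
  by (simp add: kron_def outer_def vkron_def vec_eq_iff mult_ac)

lemma ptrace_outer: "ptrace_B (outer x x) = gram UNIV (\<lambda>_. 1) (\<lambda>k. slice k x)"
  by (simp add: vec_eq_iff ptrace_B_def outer_def gram_nth slice_def)

lemma vkron_add_left: "vkron (a + b) w = vkron a w + vkron b w"
  by (simp add: vkron_def vec_eq_iff algebra_simps)
lemma vkron_scale_left: "vkron (c *s a) w = c *s vkron a w"
  by (simp add: vkron_def vec_eq_iff algebra_simps)
lemma vkron_zero_left[simp]: "vkron 0 w = 0"
  by (simp add: vkron_def vec_eq_iff)
lemma vkron_sum_left: "vkron (\<Sum>j\<in>J. f j) w = (\<Sum>j\<in>J. vkron (f j) w)"
  by (induction J rule: infinite_finite_induct) (auto simp: vkron_add_left)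

lemma cinner_vkron: "cinner (vkron a b) (vkron c d) = cinner a c * cinner b d"
  by (simp add: cinner_def vkron_def sum_UNIV_prod sum_product mult_ac)

lemma kronA_vkron: "kron A (mat 1) *v vkron v w = vkron (A *v v) w"
proof -
  have "(kron A (mat 1) *v vkron v w) $ (i, k) = vkron (A *v v) w $ (i, k)" for i k
  proof -
    have "(kron A (mat 1) *v vkron v w) $ (i, k) = (\<Sum>j\<in>UNIV. \<Sum>l\<in>UNIV. A $ i $ j * (if k = l then 1 else 0) * (v $ j * w $ l))"
      by (simp add: matrix_vector_mult_def kron_def vkron_def sum_UNIV_prod mat_def)
    also have "\<dots> = (\<Sum>j\<in>UNIV. A $ i $ j * v $ j * w $ k)"
      by (intro sum.cong refl) (simp add: if_distrib if_distribR mult_ac cong: if_cong)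
    also have "\<dots> = vkron (A *v v) w $ (i, k)"
      by (simp add: vkron_def matrix_vector_mult_def sum_distrib_right)
    finally show ?thesis .
  qed
  then show ?thesis by (simp add: vec_eq_iff)
qed

lemma kronB_vkron: "kron (mat 1) B *v vkron v w = vkron v (B *v w)"
proof -
  have "(kron (mat 1) B *v vkron v w) $ (i, k) = vkron v (B *v w) $ (i, k)" for i k
  proof -
    have "(kron (mat 1) B *v vkron v w) $ (i, k) = (\<Sum>j\<in>UNIV. \<Sum>l\<in>UNIV. (if i = j then 1 else 0) * B $ k $ l * (v $ j * w $ l))"
      by (simp add: matrix_vector_mult_def kron_def vkron_def sum_UNIV_prod mat_def)
    also have "\<dots> = (\<Sum>j\<in>UNIV. if i = j then (\<Sum>l\<in>UNIV. B $ k $ l * (v $ j * w $ l)) else 0)"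
      by (intro sum.cong refl) (simp add: if_distrib if_distribR cong: if_cong)
    also have "\<dots> = vkron v (B *v w) $ (i, k)"
      by (simp add: vkron_def matrix_vector_mult_def sum_distrib_left mult_ac)
    finally show ?thesis .
  qed
  then show ?thesis by (simp add: vec_eq_iff)
qed

lemma cinner_kronA: "cinner x (kron A (mat 1) *v x) = (\<Sum>k\<in>UNIV. cinner (slice k x) (A *v slice k x))"
proof -
  have "cinner x (kron A (mat 1) *v x) = (\<Sum>i\<in>UNIV. \<Sum>k\<in>UNIV. cnj (x $ (i,k)) * (\<Sum>j\<in>UNIV. \<Sum>l\<in>UNIV. A $ i $ j * (if k = l then 1 else 0) * x $ (j, l)))"
    by (simp add: cinner_def matrix_vector_mult_def kron_def sum_UNIV_prod mat_def)
  also have "\<dots> = (\<Sum>i\<in>UNIV. \<Sum>k\<in>UNIV. cnj (x $ (i,k)) * (\<Sum>j\<in>UNIV. A $ i $ j * x $ (j, k)))"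
    by (intro sum.cong refl) (simp add: if_distrib if_distribR cong: if_cong)
  also have "\<dots> = (\<Sum>k\<in>UNIV. \<Sum>i\<in>UNIV. cnj (x $ (i,k)) * (\<Sum>j\<in>UNIV. A $ i $ j * x $ (j, k)))"
    by (rule sum.swap)
  also have "\<dots> = (\<Sum>k\<in>UNIV. cinner (slice k x) (A *v slice k x))"
    by (simp add: cinner_def matrix_vector_mult_def slice_def)
  finally show ?thesis .
qed

lemma sum_delta_mul:
  fixes f :: "'a::finite \<Rightarrow> 'b::finite \<Rightarrow> complex"
  shows "(\<Sum>j\<in>UNIV. \<Sum>l\<in>UNIV. (if i = j then 1 else 0) * f j l) = (\<Sum>l\<in>UNIV. (f i l::complex))"
proof -
  have "(\<Sum>j\<in>UNIV. \<Sum>l\<in>UNIV. (if i = j then 1 else 0) * f j l) = (\<Sum>j\<in>UNIV. if i = j then (\<Sum>l\<in>UNIV. f j l) else 0)"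
    by (intro sum.cong) auto
  also have "\<dots> = (\<Sum>l\<in>UNIV. f i l)" by (simp add: sum.delta sum.delta')
  finally show ?thesis .
qed

lemma cinner_kronB: "cinner x (kron (mat 1) B *v x) = (\<Sum>i\<in>UNIV. cinner (sliceA i x) (B *v sliceA i x))"
proof -
  have "cinner x (kron (mat 1) B *v x) = (\<Sum>i\<in>UNIV. \<Sum>k\<in>UNIV. cnj (x $ (i,k)) * (\<Sum>j\<in>UNIV. \<Sum>l\<in>UNIV. (if i = j then 1 else 0) * B $ k $ l * x $ (j, l)))"
    by (simp add: cinner_def matrix_vector_mult_def kron_def sum_UNIV_prod mat_def)
  also have "\<dots> = (\<Sum>i\<in>UNIV. \<Sum>k\<in>UNIV. cnj (x $ (i,k)) * (\<Sum>l\<in>UNIV. B $ k $ l * x $ (i, l)))"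
    by (intro sum.cong refl) (simp only: mult.assoc sum_delta_mul)
  also have "\<dots> = (\<Sum>i\<in>UNIV. cinner (sliceA i x) (B *v sliceA i x))"
    by (simp add: cinner_def matrix_vector_mult_def sliceA_def)
  finally show ?thesis .
qed

lemma cinner_sliceA: "cinner x y = (\<Sum>i\<in>UNIV. cinner (sliceA i x) (sliceA i y))"
  by (simp add: cinner_def sliceA_def sum_UNIV_prod)

lemma cinner_slice: "cinner x y = (\<Sum>k\<in>UNIV. cinner (slice k x) (slice k y))"
proof -
  have "cinner x y = (\<Sum>i\<in>UNIV. \<Sum>k\<in>UNIV. cnj (x $ (i,k)) * y $ (i,k))"
    by (simp add: cinner_def sum_UNIV_prod)
  also have "\<dots> = (\<Sum>k\<in>UNIV. \<Sum>i\<in>UNIV. cnj (x $ (i,k)) * y $ (i,k))"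
    by (rule sum.swap)
  finally show ?thesis by (simp add: cinner_def slice_def)
qed

lemma vkron_from_slices:
  assumes "\<forall>i. sliceA i x = c i *s w"
  shows "x = vkron (\<chi> i. c i) w"
proof -
  have "x $ (i, k) = vkron (\<chi> i. c i) w $ (i, k)" for i k
    using assms[rule_format, of i] by (simp add: sliceA_def vkron_def vec_eq_iff)
  then show ?thesis by (simp add: vec_eq_iff)
qed

lemma slice_vkron: "slice k (vkron v w) = w $ k *s v"
  by (simp add: slice_def vkron_def vec_eq_iff mult.commute)



lemma scaleR_nth2: "(c *\<^sub>R (A::complex^'n^'m)) $ i $ j = of_real c * A $ i $ j"
  by (simp only: vector_scaleR_component) (simp add: scaleR_conv_of_real)

lemma matrix_add_rdistrib': "((B + C) ** A) = (B ** A) + (C ** A)"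
  by (vector matrix_matrix_mult_def sum.distrib[symmetric] field_simps)

lemma mm_scaleR_right: "(A::complex^'n^'m) ** (c *\<^sub>R B) = c *\<^sub>R (A ** B)"
  by (simp add: vec_eq_iff matrix_matrix_mult_def scaleR_sum_right mult_ac)
lemma mm_scaleR_left: "(c *\<^sub>R (A::complex^'n^'m)) ** B = c *\<^sub>R (A ** B)"
  by (simp add: vec_eq_iff matrix_matrix_mult_def scaleR_sum_right mult_ac)

lemma kron_add_left: "kron (A + B) C = kron A C + kron B C"
  by (simp add: kron_def vec_eq_iff algebra_simps)
lemma kron_scaleR_left: "kron (c *\<^sub>R A) C = c *\<^sub>R kron A C"
  by (simp add: kron_def vec_eq_iff scaleR_nth2 mult_ac)
lemma ptrace_add: "ptrace_B (A + B) = ptrace_B A + ptrace_B B"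
  by (simp add: ptrace_B_def vec_eq_iff sum.distrib)
lemma ptrace_scaleR: "ptrace_B (c *\<^sub>R A) = c *\<^sub>R ptrace_B A"
  by (simp add: ptrace_B_def vec_eq_iff scaleR_sum_right)

lemma chan_add: "chan U \<phi> (A + B) = chan U \<phi> A + chan U \<phi> B"
  by (simp add: chan_def kron_add_left matrix_add_ldistrib matrix_add_rdistrib' ptrace_add)
lemma chan_scaleR: "chan U \<phi> (c *\<^sub>R A) = c *\<^sub>R chan U \<phi> A"
  by (simp add: chan_def kron_scaleR_left mm_scaleR_left mm_scaleR_right ptrace_scaleR)
lemma chan_zero[simp]: "chan U \<phi> 0 = 0"
  using chan_scaleR[of U \<phi> 0 0] by simp
lemma chan_sum: "chan U \<phi> (\<Sum>j\<in>J. f j) = (\<Sum>j\<in>J. chan U \<phi> (f j))"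
  by (induction J rule: infinite_finite_induct) (auto simp: chan_add)

lemma chan_outer: "chan U \<phi> (outer v v) = gram UNIV (\<lambda>_. 1) (\<lambda>k. slice k (U *v vkron v \<phi>))"
  by (simp add: chan_def kron_outer conj_outer ptrace_outer)

lemma chan_gram:
  assumes "finite J"
  shows "chan U \<phi> (gram J w v) = gram (J \<times> UNIV) (\<lambda>p. w (fst p)) (\<lambda>p. slice (snd p) (U *v vkron (v (fst p)) \<phi>))"
proof -
  have "chan U \<phi> (gram J w v) = (\<Sum>j\<in>J. w j *\<^sub>R (\<Sum>k\<in>UNIV. outer (slice k (U *v vkron (v j) \<phi>)) (slice k (U *v vkron (v j) \<phi>))))"
    by (simp add: gram_def chan_sum chan_scaleR chan_outer)
  also have "\<dots> = (\<Sum>j\<in>J. \<Sum>k\<in>UNIV. w j *\<^sub>R outer (slice k (U *v vkron (v j) \<phi>)) (slice k (U *v vkron (v j) \<phi>)))"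
    by (simp add: scaleR_sum_right)
  also have "\<dots> = gram (J \<times> UNIV) (\<lambda>p. w (fst p)) (\<lambda>p. slice (snd p) (U *v vkron (v (fst p)) \<phi>))"
    unfolding gram_def using assms by (simp add: sum.cartesian_product split_def)
  finally show ?thesis .
qed

lemma trace_outer: "trace (A ** outer v v) = cinner v (A *v v)"
  by (simp add: trace_def matrix_matrix_mult_def outer_def cinner_def matrix_vector_mult_def
      sum_distrib_left mult_ac)

lemma trace_add': "trace (A + B) = trace A + trace (B::complex^'n^'n)"
  by (simp add: trace_def sum.distrib)
lemma trace_scaleR: "trace (c *\<^sub>R (A::complex^'n^'n)) = of_real c * trace A"
  by (simp add: trace_def sum_distrib_left) (simp add: scaleR_conv_of_real)

lemma energy_add: "energy M (A + B) = energy M A + energy M B"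
  by (simp add: energy_def matrix_add_ldistrib trace_add')
lemma energy_scaleR: "energy M (c *\<^sub>R A) = c * energy M A"
  by (simp add: energy_def mm_scaleR_right trace_scaleR)
lemma energy_zero[simp]: "energy M 0 = 0"
  using energy_scaleR[of M 0 0] by simp
lemma energy_sum: "energy M (\<Sum>j\<in>J. f j) = (\<Sum>j\<in>J. energy M (f j))"
  by (induction J rule: infinite_finite_induct) (auto simp: energy_add)

lemma energy_gram: "energy M (gram J w v) = (\<Sum>j\<in>J. w j * Re (cinner (v j) (M *v v j)))"
  unfolding gram_def energy_sum energy_scaleR by (simp add: energy_def trace_outer)



locale setting =
  fixes MA :: "complex^'a::finite^'a" and MB :: "complex^'b::finite^'b"
    and U :: "complex^('a \<times> 'b)^('a \<times> 'b)" and \<phi> :: "complex^'b" and lam :: complex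
  assumes hA: "hermitian MA" and hB: "hermitian MB" and unit: "unitary U"
    and comm: "(kron MA (mat 1) + kron (mat 1) MB) ** U = U ** (kron MA (mat 1) + kron (mat 1) MB)"
    and nphi: "norm \<phi> = 1" and eigphi: "MB *v \<phi> = lam *s \<phi>"
    and minc: "\<forall>\<mu>. is_eigenvalue MB \<mu> \<longrightarrow> Re lam \<le> Re \<mu>"
    and uniqB: "\<forall>v. MB *v v = lam *s v \<longrightarrow> (\<exists>c. v = c *s \<phi>)"
begin

lemma cnj_mult_self: "cnj z * z = of_real ((cmod z)^2)"
  by (metis complex_norm_square mult.commute of_real_power)

lemma phi1: "cinner \<phi> \<phi> = 1"
  using nphi by (simp add: cinner_self)

lemma phi0: "\<phi> \<noteq> 0"
  using nphi by auto

lemma lam_real: "lam = of_real (Re lam)"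
proof -
  have "cinner \<phi> (MB *v \<phi>) = lam" using eigphi phi1 by (simp add: cinner_scale_right)
  moreover have "Im (cinner \<phi> (MB *v \<phi>)) = 0" by (rule herm_real[OF hB])
  ultimately show ?thesis by (simp add: complex_eq_iff)
qed

lemma MB_var:
  shows "Re lam * (norm z)^2 \<le> Re (cinner z (MB *v z))"
    and "Re (cinner z (MB *v z)) = Re lam * (norm z)^2 \<Longrightarrow> MB *v z = lam *s z"
proof -
  obtain F where F: "finite F" "orthonormal F" "\<forall>g\<in>F. MB *v g = of_real (Re (cinner g (MB *v g))) *s g"
      "\<forall>x. x = (\<Sum>g\<in>F. cinner g x *s g)"
    using spectral[OF hB] by blast
  define ev where "ev g = Re (cinner g (MB *v g))" for g
  define c where "c g = cinner g z" for g
  have zexp: "z = (\<Sum>g\<in>F. c g *s g)" using F(4) by (simp add: c_def)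
  have MBz: "MB *v z = (\<Sum>g\<in>F. (of_real (ev g) * c g) *s g)"
    using spec_apply[OF F(2,1,4) F(3)[folded ev_def]] by (simp add: c_def)
  have q: "cinner z (MB *v z) = of_real (\<Sum>g\<in>F. ev g * (cmod (c g))^2)"
  proof -
    have "cinner z (MB *v z) = (\<Sum>g\<in>F. cnj (c g) * (of_real (ev g) * c g))"
      unfolding MBz by (subst zexp) (rule orth_cinner_sums[OF F(2,1)])
    also have "\<dots> = (\<Sum>g\<in>F. of_real (ev g) * (cnj (c g) * c g))"
      by (simp add: mult_ac)
    also have "\<dots> = of_real (\<Sum>g\<in>F. ev g * (cmod (c g))^2)"
      by (simp add: cnj_mult_self)
    finally show ?thesis .
  qed
  have nz: "(norm z)^2 = (\<Sum>g\<in>F. (cmod (c g))^2)"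
  proof -
    have "cinner z z = (\<Sum>g\<in>F. cnj (c g) * c g)"
      by (subst (1 2) zexp) (rule orth_cinner_sums[OF F(2,1)])
    also have "\<dots> = of_real (\<Sum>g\<in>F. (cmod (c g))^2)"
      by (simp add: cnj_mult_self)
    finally show ?thesis by (metis Re_cinner_self Re_complex_of_real)
  qed
  have evge: "Re lam \<le> ev g" if "g \<in> F" for g
  proof -
    have "cinner g g = 1" using F(2) that by (simp add: orthonormal_def)
    then have "g \<noteq> 0" by auto
    then have "is_eigenvalue MB (of_real (ev g))"
      using F(3) that by (auto simp: is_eigenvalue_def ev_def)
    then show ?thesis using minc by fastforce
  qed
  have terms: "\<forall>g\<in>F. 0 \<le> (ev g - Re lam) * (cmod (c g))^2" using evge by simp
  have diff: "Re (cinner z (MB *v z)) - Re lam * (norm z)^2 = (\<Sum>g\<in>F. (ev g - Re lam) * (cmod (c g))^2)"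
    by (simp add: q nz sum_distrib_left sum_subtractf algebra_simps)
  show "Re lam * (norm z)^2 \<le> Re (cinner z (MB *v z))"
  proof -
    have "0 \<le> (\<Sum>g\<in>F. (ev g - Re lam) * (cmod (c g))^2)"
      by (rule sum_nonneg) (use terms in auto)
    then show ?thesis using diff by linarith
  qed
  assume eq: "Re (cinner z (MB *v z)) = Re lam * (norm z)^2"
  then have s0: "(\<Sum>g\<in>F. (ev g - Re lam) * (cmod (c g))^2) = 0" using diff by simp
  have z0: "\<forall>g\<in>F. (ev g - Re lam) * (cmod (c g))^2 = 0"
    using sum_nonneg_eq_0_iff[OF F(1), of "\<lambda>g. (ev g - Re lam) * (cmod (c g))^2"] terms s0 by blast
  have "MB *v z = (\<Sum>g\<in>F. (lam * c g) *s g)"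
    unfolding MBz
  proof (intro sum.cong refl)
    fix g assume g: "g \<in> F"
    have "of_real (ev g) * c g = lam * c g"
    proof (cases "c g = 0")
      case False
      then have "ev g = Re lam" using z0 g by auto
      then show ?thesis by (subst lam_real) simp
    qed simp
    then show "(of_real (ev g) * c g) *s g = (lam * c g) *s g" by simp
  qed
  also have "\<dots> = lam *s (\<Sum>g\<in>F. c g *s g)" by (simp add: vec.scale_sum_right vector_smult_assoc)
  also have "\<dots> = lam *s z" by (simp only: zexp[symmetric])
  finally show "MB *v z = lam *s z" .
qed

definition Mtot where "Mtot = kron MA (mat 1) + kron (mat 1) MB"

lemma pure_energy:
  fixes v :: "complex^'a"
  defines "x \<equiv> U *v vkron v \<phi>"
  shows "Re (cinner x (kron MA (mat 1) *v x)) \<le> Re (cinner v (MA *v v))"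
    and "Re (cinner x (kron MA (mat 1) *v x)) = Re (cinner v (MA *v v)) \<Longrightarrow> \<exists>\<nu>. x = vkron \<nu> \<phi>"
proof -
  define y where "y = vkron v \<phi>"
  have Mx: "Mtot *v x = U *v (Mtot *v y)"
    unfolding x_def y_def Mtot_def by (simp add: matrix_vector_mul_assoc comm)
  have cxx: "cinner x (Mtot *v x) = cinner y (Mtot *v y)"
    unfolding Mx by (simp add: x_def y_def unitary_cinner[OF unit])
  have My: "Mtot *v y = vkron (MA *v v) \<phi> + vkron v (lam *s \<phi>)"
    by (simp add: Mtot_def y_def matrix_vector_mult_add_rdistrib kronA_vkron kronB_vkron eigphi)
  have cyy: "cinner y (Mtot *v y) = cinner v (MA *v v) + lam * cinner v v"
    unfolding My by (simp add: y_def cinner_add_right cinner_vkron cinner_scale_right phi1)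
  have nxv: "(norm x)^2 = (norm v)^2"
  proof -
    have "cinner x x = cinner v v" by (simp add: x_def unitary_cinner[OF unit] cinner_vkron phi1)
    then show ?thesis by (metis Re_cinner_self)
  qed
  have split: "cinner x (Mtot *v x) = cinner x (kron MA (mat 1) *v x) + cinner x (kron (mat 1) MB *v x)"
    by (simp add: Mtot_def matrix_vector_mult_add_rdistrib cinner_add_right)
  define s where "s i = sliceA i x" for i
  have B: "cinner x (kron (mat 1) MB *v x) = (\<Sum>i\<in>UNIV. cinner (s i) (MB *v s i))"
    by (simp add: s_def cinner_kronB)
  have nxs: "(norm x)^2 = (\<Sum>i\<in>UNIV. (norm (s i))^2)"
  proof -
    have "Re (cinner x x) = (\<Sum>i\<in>UNIV. Re (cinner (s i) (s i)))"
      by (simp add: s_def cinner_sliceA[of x x])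
    then show ?thesis by (simp add: Re_cinner_self)
  qed
  have ReB: "Re lam * (norm x)^2 \<le> Re (cinner x (kron (mat 1) MB *v x))"
    unfolding B nxs Re_sum sum_distrib_left by (rule sum_mono) (rule MB_var(1))
  have Recyy: "Re (cinner y (Mtot *v y)) = Re (cinner v (MA *v v)) + Re lam * (norm v)^2"
    by (subst lam_real) (simp add: cyy cinner_self)
  have key: "Re (cinner x (kron MA (mat 1) *v x)) = Re (cinner v (MA *v v)) + Re lam * (norm v)^2 - Re (cinner x (kron (mat 1) MB *v x))"
    using split cxx Recyy by (metis add_diff_cancel_right' plus_complex.sel(1))
  have nxv': "Re lam * (norm x)^2 = Re lam * (norm v)^2" using nxv by simp
  show "Re (cinner x (kron MA (mat 1) *v x)) \<le> Re (cinner v (MA *v v))"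
    using key ReB nxv' by linarith
  assume eq: "Re (cinner x (kron MA (mat 1) *v x)) = Re (cinner v (MA *v v))"
  then have "Re (cinner x (kron (mat 1) MB *v x)) = Re lam * (norm x)^2" using key nxv' by linarith
  then have "(\<Sum>i\<in>UNIV. Re (cinner (s i) (MB *v s i)) - Re lam * (norm (s i))^2) = 0"
    by (simp add: B nxs sum_subtractf sum_distrib_left)
  then have "\<forall>i\<in>UNIV. Re (cinner (s i) (MB *v s i)) - Re lam * (norm (s i))^2 = 0"
    by (subst sum_nonneg_eq_0_iff[symmetric]) (auto intro: MB_var(1) simp: algebra_simps)
  then have "\<forall>i. MB *v s i = lam *s s i" using MB_var(2) by auto
  then have "\<forall>i. \<exists>c. s i = c *s \<phi>" using uniqB by blast
  then obtain c where "\<forall>i. s i = c i *s \<phi>" by metis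
  then have "x = vkron (\<chi> i. c i) \<phi>" by (intro vkron_from_slices) (simp add: s_def)
  then show "\<exists>\<nu>. x = vkron \<nu> \<phi>" by blast
qed

end



lemma cnj_mult_self2: "cnj z * z = of_real ((cmod z)^2)"
  by (metis complex_norm_square mult.commute of_real_power)

lemma outer_scale: "outer (c *s v) (c *s v) = (cmod c)^2 *\<^sub>R outer v v"
  by (simp add: outer_def vec_eq_iff) (simp add: scaleR_conv_of_real mult_ac flip: cnj_mult_self2 del: of_real_power)

lemma trace_outer1: "trace (outer v v) = cinner v v"
  using trace_outer[of "mat 1" v] by simp

lemma gram_single: "gram {v} w id = w v *\<^sub>R outer v v"
  by (simp add: gram_def)

definition perp :: "complex^'n^'n \<Rightarrow> complex^'n \<Rightarrow> bool" where
  "perp \<rho> x \<longleftrightarrow> (\<forall>y. \<rho> *v y = 0 \<longrightarrow> cinner y x = 0)"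

lemma perp_eig:
  assumes "hermitian \<rho>" "\<rho> *v g = of_real p *s g" "p > 0"
  shows "perp \<rho> g"
  unfolding perp_def
proof (intro allI impI)
  fix y assume y: "\<rho> *v y = 0"
  have "of_real p * cinner y g = cinner y (\<rho> *v g)" using assms(2) by (simp add: cinner_scale_right)
  also have "\<dots> = cinner (\<rho> *v y) g" using herm_cinner[OF assms(1)] by simp
  also have "\<dots> = 0" using y by simp
  finally show "cinner y g = 0" using assms(3) by simp
qed

lemma vkron_eq_0: "\<phi> \<noteq> 0 \<Longrightarrow> vkron v \<phi> = 0 \<longleftrightarrow> v = 0"
  by (metis cinner_self_eq_0 cinner_vkron mult_eq_0_iff vkron_zero_left)

context setting
begin

abbreviation "\<tau> \<equiv> chan U \<phi>"
abbreviation "E \<equiv> energy MA"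

definition Prod where "Prod = range (\<lambda>\<nu>. vkron \<nu> \<phi>)"
definition T where "T = {z. \<forall>k. (((*v) U) ^^ k) z \<in> Prod}"

lemma E_chan_gram:
  assumes "finite J"
  shows "E (\<tau> (gram J w v)) = (\<Sum>j\<in>J. w j * Re (cinner (U *v vkron (v j) \<phi>) (kron MA (mat 1) *v (U *v vkron (v j) \<phi>))))"
proof -
  have "E (\<tau> (gram J w v)) = (\<Sum>p\<in>J \<times> UNIV. w (fst p) * Re (cinner (slice (snd p) (U *v vkron (v (fst p)) \<phi>)) (MA *v slice (snd p) (U *v vkron (v (fst p)) \<phi>))))"
    by (simp add: chan_gram[OF assms] energy_gram)
  also have "\<dots> = (\<Sum>j\<in>J. \<Sum>k\<in>UNIV. w j * Re (cinner (slice k (U *v vkron (v j) \<phi>)) (MA *v slice k (U *v vkron (v j) \<phi>))))"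
    using assms by (simp add: sum.cartesian_product split_def)
  also have "\<dots> = (\<Sum>j\<in>J. w j * Re (cinner (U *v vkron (v j) \<phi>) (kron MA (mat 1) *v (U *v vkron (v j) \<phi>))))"
    by (simp add: cinner_kronA Re_sum sum_distrib_left)
  finally show ?thesis .
qed

lemma energy_mono_gram:
  assumes "finite J" "\<forall>j\<in>J. 0 \<le> w j"
  shows "E (\<tau> (gram J w v)) \<le> E (gram J w v)"
    and "E (\<tau> (gram J w v)) = E (gram J w v) \<Longrightarrow> \<forall>j\<in>J. w j > 0 \<longrightarrow> (\<exists>\<nu>. U *v vkron (v j) \<phi> = vkron \<nu> \<phi>)"
proof -
  define a where "a j = Re (cinner (U *v vkron (v j) \<phi>) (kron MA (mat 1) *v (U *v vkron (v j) \<phi>)))" for j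
  define b where "b j = Re (cinner (v j) (MA *v v j))" for j
  have Ea: "E (\<tau> (gram J w v)) = (\<Sum>j\<in>J. w j * a j)" using E_chan_gram[OF assms(1)] by (simp add: a_def)
  have Eb: "E (gram J w v) = (\<Sum>j\<in>J. w j * b j)" by (simp add: energy_gram b_def)
  have ab: "a j \<le> b j" for j unfolding a_def b_def by (rule pure_energy(1))
  have t: "\<forall>j\<in>J. 0 \<le> w j * b j - w j * a j" using assms(2) ab
    by (simp add: mult_left_mono flip: right_diff_distrib)
  show "E (\<tau> (gram J w v)) \<le> E (gram J w v)"
    unfolding Ea Eb using assms(2) ab by (intro sum_mono mult_left_mono) auto
  assume eq: "E (\<tau> (gram J w v)) = E (gram J w v)"
  then have "(\<Sum>j\<in>J. w j * b j - w j * a j) = 0" unfolding Ea Eb by (simp add: sum_subtractf)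
  then have z: "\<forall>j\<in>J. w j * b j - w j * a j = 0"
    using sum_nonneg_eq_0_iff[OF assms(1), of "\<lambda>j. w j * b j - w j * a j"] t by blast
  show "\<forall>j\<in>J. w j > 0 \<longrightarrow> (\<exists>\<nu>. U *v vkron (v j) \<phi> = vkron \<nu> \<phi>)"
  proof (intro ballI impI)
    fix j assume j: "j \<in> J" "w j > 0"
    then have "a j = b j" using z by force
    then show "\<exists>\<nu>. U *v vkron (v j) \<phi> = vkron \<nu> \<phi>" unfolding a_def b_def by (rule pure_energy(2))
  qed
qed

lemma norm_Uvkron: "(norm (U *v vkron g \<phi>))^2 = (norm g)^2"
proof -
  have "cinner (U *v vkron g \<phi>) (U *v vkron g \<phi>) = cinner g g"
    by (simp add: unitary_cinner[OF unit] cinner_vkron phi1)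
  then show ?thesis by (metis Re_cinner_self)
qed

lemma sum_slice_norm: "(\<Sum>k\<in>UNIV. (norm (slice k x))^2) = (norm x)^2"
proof -
  have "Re (cinner x x) = (\<Sum>k\<in>UNIV. Re (cinner (slice k x) (slice k x)))"
    by (simp add: cinner_slice[of x x])
  then show ?thesis by (simp add: Re_cinner_self)
qed

lemma chan_density:
  assumes "density \<rho>"
  shows "density (\<tau> \<rho>)"
proof -
  obtain F p where F: "finite F" "orthonormal F" "\<forall>g\<in>F. 0 \<le> p g" "\<rho> = gram F p id" "(\<Sum>g\<in>F. p g) = 1"
    using density_decomp[OF assms] by blast
  have n1: "\<forall>g\<in>F. (norm g)^2 = 1"
    using F(2) unfolding orthonormal_def by (metis Re_cinner_self one_complex.simps(1))
  have "(\<Sum>q\<in>F \<times> UNIV. p (fst q) * (norm (slice (snd q) (U *v vkron (id (fst q)) \<phi>)))^2)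
      = (\<Sum>g\<in>F. p g * (\<Sum>k\<in>UNIV. (norm (slice k (U *v vkron g \<phi>)))^2))"
    using F(1) by (simp add: sum.cartesian_product split_def sum_distrib_left)
  also have "\<dots> = (\<Sum>g\<in>F. p g)" using n1 by (simp add: sum_slice_norm norm_Uvkron)
  finally have s: "(\<Sum>q\<in>F \<times> UNIV. p (fst q) * (norm (slice (snd q) (U *v vkron (id (fst q)) \<phi>)))^2) = 1"
    using F(5) by simp
  show ?thesis unfolding F(4) chan_gram[OF F(1)]
    by (rule gram_density) (use F(3) s in auto)
qed

lemma chan_iter_density: "density \<rho> \<Longrightarrow> density ((\<tau> ^^ m) \<rho>)"
  by (induction m) (auto intro: chan_density)

lemma energy_mono:
  assumes "density \<rho>"
  shows "E (\<tau> \<rho>) \<le> E \<rho>"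
proof -
  obtain F p where F: "finite F" "\<forall>g\<in>F. 0 \<le> p g" "\<rho> = gram F p id"
    using density_decomp[OF assms] by blast
  show ?thesis unfolding F(3) by (rule energy_mono_gram(1)[OF F(1,2)])
qed

lemma phi_nz_comp: "\<exists>k. \<phi> $ k \<noteq> 0"
  using phi0 by (metis vec_eq_iff zero_index)

lemma step_lemma:
  assumes "density \<sigma>" "E (\<tau> \<sigma>) = E \<sigma>" "perp \<sigma> x"
  shows "\<exists>\<nu>. U *v vkron x \<phi> = vkron \<nu> \<phi> \<and> perp (\<tau> \<sigma>) \<nu>"
proof -
  obtain F p where F: "finite F" "orthonormal F" "\<forall>g\<in>F. 0 \<le> p g" "\<sigma> = gram F p id"
      "\<forall>g\<in>F. \<sigma> *v g = of_real (p g) *s g" "\<forall>x. x = (\<Sum>g\<in>F. cinner g x *s g)"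
    using density_decomp[OF assms(1)] by blast
  have "\<forall>g\<in>F. p g > 0 \<longrightarrow> (\<exists>\<nu>. U *v vkron (id g) \<phi> = vkron \<nu> \<phi>)"
    using energy_mono_gram(2)[OF F(1,3), of id] assms(2) F(4) by simp
  then obtain nu where nu: "\<forall>g\<in>F. p g > 0 \<longrightarrow> U *v vkron g \<phi> = vkron (nu g) \<phi>" by (simp; metis)
  define G where "G = {g\<in>F. p g > 0}"
  have fG: "finite G" using F(1) by (simp add: G_def)
  have xG: "x = (\<Sum>g\<in>G. cinner g x *s g)"
  proof -
    have "x = (\<Sum>g\<in>F. cinner g x *s g)" using F(6) by blast
    also have "\<dots> = (\<Sum>g\<in>G. cinner g x *s g)"
    proof (rule sum.mono_neutral_right[OF F(1)])
      show "G \<subseteq> F" by (auto simp: G_def)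
      show "\<forall>g\<in>F - G. cinner g x *s g = 0"
      proof
        fix g assume g: "g \<in> F - G"
        then have "p g = 0" using F(3) by (auto simp: G_def)
        then have "\<sigma> *v g = 0" using F(5) g by simp
        then have "cinner g x = 0" using assms(3) by (simp add: perp_def)
        then show "cinner g x *s g = 0" by simp
      qed
    qed
    finally show ?thesis .
  qed
  define \<nu> where "\<nu> = (\<Sum>g\<in>G. cinner g x *s nu g)"
  have U1: "U *v vkron x \<phi> = vkron \<nu> \<phi>"
  proof -
    have "U *v vkron x \<phi> = (\<Sum>g\<in>G. cinner g x *s (U *v vkron g \<phi>))"
      by (subst xG) (simp add: vkron_sum_left vkron_scale_left vec.sum vec.scale)
    also have "\<dots> = (\<Sum>g\<in>G. cinner g x *s vkron (nu g) \<phi>)"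
      using nu by (intro sum.cong refl) (simp add: G_def)
    also have "\<dots> = vkron \<nu> \<phi>" by (simp add: \<nu>_def vkron_sum_left vkron_scale_left)
    finally show ?thesis .
  qed
  obtain k0 where k0: "\<phi> $ k0 \<noteq> 0" using phi_nz_comp by blast
  have perp2: "perp (\<tau> \<sigma>) \<nu>"
    unfolding perp_def
  proof (intro allI impI)
    fix y assume y: "\<tau> \<sigma> *v y = 0"
    have gy: "cinner (nu g) y = 0" if g: "g \<in> G" for g
    proof -
      have "cinner (slice (snd (g, k0)) (U *v vkron (id (fst (g, k0))) \<phi>)) y = 0"
        using y F(1,3) g unfolding F(4) chan_gram[OF F(1)]
        by (intro gram_kernel[of "F \<times> UNIV" "\<lambda>q. p (fst q)"]) (auto simp: G_def)
      then have "cinner (\<phi> $ k0 *s nu g) y = 0" using nu g by (simp add: G_def slice_vkron)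
      then show ?thesis using k0 by (simp add: cinner_scale_left)
    qed
    have "cinner y \<nu> = (\<Sum>g\<in>G. cinner g x * cinner y (nu g))"
      by (simp add: \<nu>_def cinner_sum_right cinner_scale_right)
    also have "\<dots> = 0" using gy by (simp add: cinner_commute[of y])
    finally show "cinner y \<nu> = 0" .
  qed
  show ?thesis using U1 perp2 by blast
qed

lemma iter_T:
  assumes "density \<sigma>" "\<forall>m. E (\<tau> ((\<tau> ^^ m) \<sigma>)) = E ((\<tau> ^^ m) \<sigma>)" "perp \<sigma> x"
  shows "vkron x \<phi> \<in> T"
proof -
  have "\<forall>m x. perp ((\<tau> ^^ m) \<sigma>) x \<longrightarrow> (\<exists>\<nu>. (((*v) U) ^^ k) (vkron x \<phi>) = vkron \<nu> \<phi>)" for k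
  proof (induction k)
    case 0
    then show ?case by auto
  next
    case (Suc k)
    show ?case
    proof (intro allI impI)
      fix m x assume px: "perp ((\<tau> ^^ m) \<sigma>) x"
      obtain \<nu> where nu: "U *v vkron x \<phi> = vkron \<nu> \<phi>" "perp (\<tau> ((\<tau> ^^ m) \<sigma>)) \<nu>"
        using step_lemma[OF chan_iter_density[OF assms(1)] assms(2)[rule_format] px] by blast
      have "perp ((\<tau> ^^ Suc m) \<sigma>) \<nu>" using nu(2) by simp
      then obtain \<nu>' where "(((*v) U) ^^ k) (vkron \<nu> \<phi>) = vkron \<nu>' \<phi>" using Suc.IH by blast
      then have "(((*v) U) ^^ Suc k) (vkron x \<phi>) = vkron \<nu>' \<phi>"
        using nu(1) by (simp add: funpow_Suc_right del: funpow.simps)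
      then show "\<exists>\<nu>. (((*v) U) ^^ Suc k) (vkron x \<phi>) = vkron \<nu> \<phi>" by blast
    qed
  qed
  then have "\<exists>\<nu>. (((*v) U) ^^ k) (vkron x \<phi>) = vkron \<nu> \<phi>" for k
    using assms(3) by (metis funpow_0)
  then show ?thesis by (auto simp: T_def Prod_def)
qed

end



lemma norm_smult_cvec: "norm (c *s (x::complex^'n)) = cmod c * norm x"
  by (simp add: norm_vec_def L2_set_def norm_mult power_mult_distrib sum_distrib_left[symmetric] real_sqrt_mult)

lemma vkron_diff_left: "vkron (a - b) w = vkron a w - vkron b w"
  by (simp add: vkron_def vec_eq_iff algebra_simps)

lemma slice_scale: "slice k (c *s x) = c *s slice k x"
  by (simp add: slice_def vec_eq_iff)

lemma sum_norm_comp: "(\<Sum>k\<in>UNIV. (cmod (x $ k))^2) = (norm (x::complex^'n))^2"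
  by (simp add: norm_vec_def L2_set_def sum_nonneg)

lemma powU_add: fixes U :: "complex^'n^'n" shows "(((*v) U) ^^ k) (a + b) = (((*v) U) ^^ k) a + (((*v) U) ^^ k) (b::complex^'n)"
  by (induction k) (auto simp: matrix_vector_right_distrib)

lemma powU_scale: fixes U :: "complex^'n^'n" shows "(((*v) U) ^^ k) (c *s a) = c *s (((*v) U) ^^ k) (a::complex^'n)"
  by (induction k) (auto simp: vec.scale)

lemma powU_zero: fixes U :: "complex^'n^'n" shows "(((*v) U) ^^ k) 0 = (0::complex^'n)"
  by (induction k) auto

context setting
begin

lemma Prod_add: "a \<in> Prod \<Longrightarrow> b \<in> Prod \<Longrightarrow> a + b \<in> Prod"
  by (auto simp: Prod_def simp flip: vkron_add_left)
lemma Prod_scale: "a \<in> Prod \<Longrightarrow> c *s a \<in> Prod"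
  by (auto simp: Prod_def simp flip: vkron_scale_left)
lemma Prod_zero: "0 \<in> Prod"
  by (auto simp: Prod_def intro: range_eqI[of _ _ 0])

lemma T_subspace: "vec.subspace T"
  unfolding vec.subspace_def T_def
  by (auto simp: powU_add powU_scale powU_zero Prod_add Prod_scale Prod_zero)

lemma T_inv: "\<forall>y\<in>T. U *v y \<in> T"
proof
  fix y assume "y \<in> T"
  then have A: "(((*v) U) ^^ Suc k) y \<in> Prod" for k unfolding T_def by blast
  have B: "(((*v) U) ^^ k) (U *v y) = (((*v) U) ^^ Suc k) y" for k
    by (simp only: funpow_Suc_right comp_apply)
  show "U *v y \<in> T" unfolding T_def mem_Collect_eq
  proof
    fix k show "(((*v) U) ^^ k) (U *v y) \<in> Prod" by (simp only: B A)
  qed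
qed

lemma T_Prod: "y \<in> T \<Longrightarrow> y \<in> Prod"
  unfolding T_def by (metis (mono_tags, lifting) funpow_0 mem_Collect_eq)

lemma eig_in_T:
  assumes "U *v vkron \<nu> \<phi> = \<mu> *s vkron \<nu> \<phi>"
  shows "vkron \<nu> \<phi> \<in> T"
proof -
  have "(((*v) U) ^^ k) (vkron \<nu> \<phi>) = \<mu>^k *s vkron \<nu> \<phi>" for k
    by (induction k) (auto simp: assms vec.scale vector_smult_assoc mult.commute)
  then show ?thesis unfolding T_def Prod_def by (auto simp flip: vkron_scale_left)
qed

lemma span_nu0:
  assumes ev0: "is_eigenvector U (vkron \<nu>0 \<phi>)"
    and un: "\<forall>\<nu>'. is_eigenvector U (vkron \<nu>' \<phi>) \<longrightarrow> (\<exists>c. vkron \<nu>' \<phi> = c *s vkron \<nu>0 \<phi>)"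
    and xT: "vkron x \<phi> \<in> T"
  shows "\<exists>c. x = c *s \<nu>0"
proof -
  define e where "e = vkron \<nu>0 \<phi>"
  obtain \<mu> where mu: "U *v e = \<mu> *s e" and e0: "e \<noteq> 0" using ev0 by (auto simp: is_eigenvector_def e_def)
  have eT: "e \<in> T" using eig_in_T[of \<nu>0 \<mu>] mu by (simp add: e_def)
  have adj: "ctrans U *v e = cnj \<mu> *s e" by (rule unitary_eig_adj[OF unit mu e0])
  have nu00: "\<nu>0 \<noteq> 0" using e0 by (auto simp: e_def)
  have cnn: "cinner \<nu>0 \<nu>0 \<noteq> 0" using nu00 by simp
  define d where "d = cinner \<nu>0 x / cinner \<nu>0 \<nu>0"
  define x' where "x' = x - d *s \<nu>0"
  have x'T: "vkron x' \<phi> \<in> T"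
  proof -
    have "vkron x' \<phi> = vkron x \<phi> - d *s e"
      by (simp add: x'_def e_def vkron_diff_left vkron_scale_left)
    then show ?thesis using xT eT T_subspace by (simp add: vec.subspace_diff vec.subspace_scale)
  qed
  have ortho: "cinner e (vkron x' \<phi>) = 0"
    by (simp add: e_def x'_def cinner_vkron phi1 cinner_diff_right cinner_scale_right d_def cnn)
  define T' where "T' = T \<inter> {z. cinner e z = 0}"
  have sub': "vec.subspace T'"
    using T_subspace unfolding T'_def vec.subspace_def
    by (auto simp: cinner_add_right cinner_scale_right)
  have inv': "\<forall>y\<in>T'. U *v y \<in> T'"
  proof
    fix y assume y: "y \<in> T'"
    have "cinner e (U *v y) = cinner (ctrans U *v e) y" by (simp add: cinner_matrix_right)
    also have "\<dots> = \<mu> * cinner e y" by (simp add: adj cinner_scale_left)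
    also have "\<dots> = 0" using y by (simp add: T'_def)
    finally show "U *v y \<in> T'" using y T_inv by (simp add: T'_def)
  qed
  have "x' = 0"
  proof (rule ccontr)
    assume "x' \<noteq> 0"
    then have nz: "vkron x' \<phi> \<noteq> 0" using vkron_eq_0[OF phi0] by blast
    have "vkron x' \<phi> \<in> T'" using x'T ortho by (simp add: T'_def)
    then obtain y \<mu>' where y: "y \<in> T'" "y \<noteq> 0" "U *v y = \<mu>' *s y"
      using invariant_eigvec[OF sub' inv' _ nz] by blast
    then have "y \<in> Prod" using T_Prod by (simp add: T'_def)
    then obtain \<nu>' where nu': "y = vkron \<nu>' \<phi>" by (auto simp: Prod_def)
    have "is_eigenvector U (vkron \<nu>' \<phi>)" using y nu' by (auto simp: is_eigenvector_def)
    then obtain c where c: "y = c *s e" using un nu' by (auto simp: e_def)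
    have "cinner e y = 0" using y by (simp add: T'_def)
    then have "c * cinner e e = 0" by (simp add: c cinner_scale_right)
    then have "c = 0" using e0 by simp
    then show False using c y(2) by simp
  qed
  then show ?thesis by (auto simp: x'_def)
qed

lemma exists_eig:
  assumes "density \<sigma>" "\<tau> \<sigma> = \<sigma>"
  shows "\<exists>\<nu>. is_eigenvector U (vkron \<nu> \<phi>)"
proof -
  have it: "(\<tau> ^^ m) \<sigma> = \<sigma>" for m by (induction m) (auto simp: assms(2))
  have Em: "\<forall>m. E (\<tau> ((\<tau> ^^ m) \<sigma>)) = E ((\<tau> ^^ m) \<sigma>)" by (simp add: it assms(2))
  obtain F p where F: "finite F" "orthonormal F" "\<forall>g\<in>F. 0 \<le> p g" "\<sigma> = gram F p id"
      "(\<Sum>g\<in>F. p g) = 1" "\<forall>g\<in>F. \<sigma> *v g = of_real (p g) *s g"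
    using density_decomp[OF assms(1)] by blast
  have "\<exists>g\<in>F. p g > 0"
  proof (rule ccontr)
    assume "\<not> (\<exists>g\<in>F. p g > 0)"
    then have "\<forall>g\<in>F. p g = 0" using F(3) by force
    then show False using F(5) by simp
  qed
  then obtain g where g: "g \<in> F" "p g > 0" by blast
  have herm: "hermitian \<sigma>" using assms(1) by (simp add: density_def)
  have "perp \<sigma> g" using perp_eig[OF herm] F(6) g by blast
  then have gT: "vkron g \<phi> \<in> T" by (rule iter_T[OF assms(1) Em])
  have "cinner g g = 1" using F(2) g(1) by (simp add: orthonormal_def)
  then have "g \<noteq> 0" by auto
  then have nz: "vkron g \<phi> \<noteq> 0" using vkron_eq_0[OF phi0] by blast
  obtain y \<mu> where y: "y \<in> T" "y \<noteq> 0" "U *v y = \<mu> *s y"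
    using invariant_eigvec[OF T_subspace T_inv gT nz] by blast
  then obtain \<nu> where "y = vkron \<nu> \<phi>" using T_Prod by (auto simp: Prod_def)
  then show ?thesis using y by (auto simp: is_eigenvector_def)
qed

definition sig where "sig \<nu> = gram {\<nu>} (\<lambda>_. 1 / (norm \<nu>)^2) id"

lemma sig_density: "\<nu> \<noteq> 0 \<Longrightarrow> density (sig \<nu>)"
  unfolding sig_def by (rule gram_density) auto

lemma limit_char:
  assumes ev0: "is_eigenvector U (vkron \<nu>0 \<phi>)"
    and un: "\<forall>\<nu>'. is_eigenvector U (vkron \<nu>' \<phi>) \<longrightarrow> (\<exists>c. vkron \<nu>' \<phi> = c *s vkron \<nu>0 \<phi>)"
    and den: "density \<sigma>" and Em: "\<forall>m. E (\<tau> ((\<tau> ^^ m) \<sigma>)) = E ((\<tau> ^^ m) \<sigma>)"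
  shows "\<sigma> = sig \<nu>0"
proof -
  have nu00: "\<nu>0 \<noteq> 0" using ev0 by (auto simp: is_eigenvector_def)
  obtain F p where F: "finite F" "orthonormal F" "\<forall>g\<in>F. 0 \<le> p g" "\<sigma> = gram F p id"
      "(\<Sum>g\<in>F. p g) = 1" "\<forall>g\<in>F. \<sigma> *v g = of_real (p g) *s g"
    using density_decomp[OF den] by blast
  have herm: "hermitian \<sigma>" using den by (simp add: density_def)
  have "\<forall>g\<in>F. p g > 0 \<longrightarrow> (\<exists>c. g = c *s \<nu>0)"
  proof (intro ballI impI)
    fix g assume g: "g \<in> F" "p g > 0"
    have "perp \<sigma> g" using perp_eig[OF herm] F(6) g by blast
    then have "vkron g \<phi> \<in> T" by (rule iter_T[OF den Em])
    then show "\<exists>c. g = c *s \<nu>0" by (rule span_nu0[OF ev0 un])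
  qed
  then obtain cg where cg: "\<forall>g\<in>F. p g > 0 \<longrightarrow> g = cg g *s \<nu>0" by metis
  define \<alpha> where "\<alpha> = (\<Sum>g\<in>F. p g * (cmod (cg g))^2)"
  have s\<alpha>: "\<sigma> = \<alpha> *\<^sub>R outer \<nu>0 \<nu>0"
  proof -
    have "\<sigma> = (\<Sum>g\<in>F. p g *\<^sub>R outer g g)" by (simp add: F(4) gram_def)
    also have "\<dots> = (\<Sum>g\<in>F. (p g * (cmod (cg g))^2) *\<^sub>R outer \<nu>0 \<nu>0)"
    proof (intro sum.cong refl)
      fix g assume g: "g \<in> F"
      show "p g *\<^sub>R outer g g = (p g * (cmod (cg g))^2) *\<^sub>R outer \<nu>0 \<nu>0"
      proof (cases "p g > 0")
        case True
        define c where "c = cg g"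
        have "g = c *s \<nu>0" using cg g True by (simp add: c_def)
        then have "outer g g = (cmod c)^2 *\<^sub>R outer \<nu>0 \<nu>0" by (simp add: outer_scale)
        then show ?thesis by (simp add: c_def)
      next
        case False
        then have "p g = 0" using F(3) g by force
        then show ?thesis by simp
      qed
    qed
    also have "\<dots> = \<alpha> *\<^sub>R outer \<nu>0 \<nu>0" by (simp add: \<alpha>_def scaleR_sum_left)
    finally show ?thesis .
  qed
  have "trace \<sigma> = 1" using den by (simp add: density_def)
  then have "of_real \<alpha> * cinner \<nu>0 \<nu>0 = 1" by (simp add: s\<alpha> trace_scaleR trace_outer1)
  then have "complex_of_real (\<alpha> * (norm \<nu>0)^2) = 1" by (simp add: cinner_self)
  then have "\<alpha> * (norm \<nu>0)^2 = 1" using of_real_eq_1_iff by blast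
  then have "\<alpha> = 1 / (norm \<nu>0)^2" using nu00 by (simp add: field_simps)
  then show ?thesis by (simp add: s\<alpha> sig_def gram_single)
qed

lemma fixed_eig:
  assumes "is_eigenvector U (vkron \<nu> \<phi>)"
  shows "\<tau> (sig \<nu>) = sig \<nu>"
proof -
  obtain \<mu> where mu: "U *v vkron \<nu> \<phi> = \<mu> *s vkron \<nu> \<phi>" and nz: "vkron \<nu> \<phi> \<noteq> 0"
    using assms by (auto simp: is_eigenvector_def)
  have "norm (\<mu> *s vkron \<nu> \<phi>) = norm (vkron \<nu> \<phi>)" using unitary_norm[OF unit] mu by metis
  then have m1: "cmod \<mu> = 1" using nz by (simp add: norm_smult_cvec)
  have "\<tau> (outer \<nu> \<nu>) = (\<Sum>k\<in>UNIV. outer ((\<mu> * \<phi> $ k) *s \<nu>) ((\<mu> * \<phi> $ k) *s \<nu>))"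
    by (simp add: chan_outer gram_def mu slice_scale slice_vkron vector_smult_assoc)
  also have "\<dots> = (\<Sum>k\<in>UNIV. (cmod (\<phi> $ k))^2) *\<^sub>R outer \<nu> \<nu>"
    by (simp add: outer_scale scaleR_sum_left norm_mult m1)
  also have "\<dots> = outer \<nu> \<nu>" by (simp add: sum_norm_comp nphi)
  finally have "\<tau> (outer \<nu> \<nu>) = outer \<nu> \<nu>" .
  then show ?thesis by (simp add: sig_def gram_single chan_scaleR)
qed

end



lemma bl_ctrans: "bounded_linear (ctrans :: complex^'n^'n \<Rightarrow> complex^'n^'n)"
  unfolding linear_conv_bounded_linear[symmetric]
  by (rule linearI) (simp_all add: ctrans_def vec_eq_iff scaleR_nth2)

lemma bl_trace: "bounded_linear (trace :: complex^'n^'n \<Rightarrow> complex)"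
  unfolding linear_conv_bounded_linear[symmetric]
  by (rule linearI) (simp_all add: trace_add' trace_scaleR, simp add: scaleR_conv_of_real)

lemma bl_qform: "bounded_linear (\<lambda>\<rho>::complex^'n^'n. Re (qform \<rho> x))"
  unfolding linear_conv_bounded_linear[symmetric]
  by (rule linearI) (simp_all add: qform_def scaleR_nth2 matrix_vector_mult_def sum.distrib
      distrib_left distrib_right sum_distrib_left mult_ac Re_sum)

lemma density_closed:
  fixes X :: "nat \<Rightarrow> complex^'n^'n"
  assumes "\<forall>n. density (X n)" "X \<longlonglongrightarrow> \<sigma>"
  shows "density \<sigma>"
  unfolding density_def
proof (intro conjI allI)
  have "(\<lambda>n. ctrans (X n)) \<longlonglongrightarrow> ctrans \<sigma>" by (rule bounded_linear.tendsto[OF bl_ctrans assms(2)])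
  moreover have "(\<lambda>n. ctrans (X n)) = X" using assms(1) by (simp add: density_def hermitian_def fun_eq_iff)
  ultimately have "ctrans \<sigma> = \<sigma>" using assms(2) LIMSEQ_unique by auto
  then show "hermitian \<sigma>" by (simp add: hermitian_def)
  have "(\<lambda>n. trace (X n)) \<longlonglongrightarrow> trace \<sigma>" by (rule bounded_linear.tendsto[OF bl_trace assms(2)])
  moreover have "(\<lambda>n. trace (X n)) = (\<lambda>n. 1)" using assms(1) by (simp add: density_def fun_eq_iff)
  ultimately show "trace \<sigma> = 1" using LIMSEQ_const_iff by metis
  fix x
  have "(\<lambda>n. Re (qform (X n) x)) \<longlonglongrightarrow> Re (qform \<sigma> x)"
    by (rule bounded_linear.tendsto[OF bl_qform assms(2)])
  moreover have "\<forall>n. 0 \<le> Re (qform (X n) x)" using assms(1) by (simp add: density_def)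
  ultimately show "0 \<le> Re (qform \<sigma> x)" by (meson LIMSEQ_le_const)
qed

lemma norm_le_sum_vec: "norm (x::'a::real_normed_vector^'n) \<le> (\<Sum>i\<in>UNIV. norm (x$i))"
  unfolding norm_vec_def by (rule L2_set_le_sum) simp

lemma density_bounded:
  fixes \<rho> :: "complex^'n^'n"
  assumes "density \<rho>"
  shows "norm \<rho> \<le> real (CARD('n) * CARD('n))"
proof -
  obtain F p where F: "finite F" "orthonormal F" "\<forall>g\<in>F. 0 \<le> p g" "\<rho> = gram F p id"
      "(\<Sum>g\<in>F. p g) = 1"
    using density_decomp[OF assms] by blast
  have n1: "\<forall>g\<in>F. norm g = 1"
  proof
    fix g assume g: "g \<in> F"
    have "(norm g)^2 = 1"
      using F(2) g unfolding orthonormal_def by (metis Re_cinner_self one_complex.simps(1))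
    then show "norm g = 1" using power2_eq_iff_nonneg[of "norm g" 1] by simp
  qed
  have ent: "norm (\<rho> $ i $ j) \<le> 1" for i j
  proof -
    have "norm (\<rho> $ i $ j) \<le> (\<Sum>g\<in>F. norm (of_real (p g) * (g $ i * cnj (g $ j))))"
      unfolding F(4) gram_nth by (simp add: norm_sum)
    also have "\<dots> \<le> (\<Sum>g\<in>F. p g)"
    proof (rule sum_mono)
      fix g assume g: "g \<in> F"
      have "norm (g $ i) \<le> 1" "norm (g $ j) \<le> 1"
        using Finite_Cartesian_Product.norm_nth_le[of g] n1 g by (metis)+
      then have "norm (g $ i) * norm (g $ j) \<le> 1" by (simp add: mult_le_one)
      then show "norm (of_real (p g) * (g $ i * cnj (g $ j))) \<le> p g"
        using F(3) g by (simp add: norm_mult mult_left_le)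
    qed
    finally show ?thesis using F(5) by simp
  qed
  have row: "norm (\<rho> $ i) \<le> real CARD('n)" for i
  proof -
    have "norm (\<rho> $ i) \<le> (\<Sum>j\<in>UNIV. norm (\<rho> $ i $ j))" by (rule norm_le_sum_vec)
    also have "\<dots> \<le> (\<Sum>j\<in>(UNIV::'n set). 1)" by (rule sum_mono) (rule ent)
    finally show ?thesis by simp
  qed
  have "norm \<rho> \<le> (\<Sum>i\<in>UNIV. norm (\<rho> $ i))" by (rule norm_le_sum_vec)
  also have "\<dots> \<le> (\<Sum>i\<in>(UNIV::'n set). real CARD('n))" by (rule sum_mono) (rule row)
  finally show ?thesis by simp
qed

context setting
begin

lemma bl_chan: "bounded_linear \<tau>"
  unfolding linear_conv_bounded_linear[symmetric]
  by (rule linearI) (simp_all add: chan_add chan_scaleR)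

lemma bl_chan_pow: "bounded_linear (\<tau> ^^ m)"
proof (induction m)
  case 0
  then show ?case by (simp add: id_def bounded_linear_ident)
next
  case (Suc m)
  have "bounded_linear (\<lambda>x. \<tau> ((\<tau> ^^ m) x))" by (rule bounded_linear_compose[OF bl_chan Suc.IH])
  then show ?case by (simp add: o_def)
qed

lemma bl_energy: "bounded_linear E"
  unfolding linear_conv_bounded_linear[symmetric]
  by (rule linearI) (simp_all add: energy_add energy_scaleR)

lemma converse:
  assumes ev0: "is_eigenvector U (vkron \<nu>0 \<phi>)"
    and un: "\<forall>\<nu>'. is_eigenvector U (vkron \<nu>' \<phi>) \<longrightarrow> (\<exists>c. vkron \<nu>' \<phi> = c *s vkron \<nu>0 \<phi>)"
  shows "mixing \<tau>"
  unfolding mixing_def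
proof (intro exI conjI allI impI)
  have nu00: "\<nu>0 \<noteq> 0" using ev0 by (auto simp: is_eigenvector_def)
  show "density (sig \<nu>0)" by (rule sig_density[OF nu00])
  fix \<rho> :: "complex^'a^'a" assume den: "density \<rho>"
  define X where "X n = (\<tau> ^^ n) \<rho>" for n
  have Xd: "density (X n)" for n unfolding X_def by (rule chan_iter_density[OF den])
  have XSuc: "X (Suc n) = \<tau> (X n)" for n by (simp add: X_def)
  define e where "e n = E (X n)" for n
  have dec: "decseq e" unfolding decseq_Suc_iff e_def XSuc using energy_mono[OF Xd] by blast
  have "X \<longlonglongrightarrow> sig \<nu>0"
  proof (rule ccontr)
    assume nc: "\<not> X \<longlonglongrightarrow> sig \<nu>0"
    then obtain \<epsilon> where eps: "\<epsilon> > 0" "\<forall>N. \<exists>n\<ge>N. \<epsilon> \<le> dist (X n) (sig \<nu>0)"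
      unfolding lim_sequentially by (meson not_le)
    define A where "A = {n. \<epsilon> \<le> dist (X n) (sig \<nu>0)}"
    have infA: "infinite A" using eps(2) by (simp add: A_def infinite_nat_iff_unbounded_le)
    define r where "r = enumerate A"
    have r: "strict_mono r" "\<forall>j. \<epsilon> \<le> dist (X (r j)) (sig \<nu>0)"
      using strict_mono_enumerate[OF infA] enumerate_in_set[OF infA] by (auto simp: r_def A_def)
    have bnd: "bounded (range (X \<circ> r))"
      unfolding bounded_iff using density_bounded[OF Xd] by auto
    obtain \<sigma> s where s: "strict_mono s" "((X \<circ> r) \<circ> s) \<longlonglongrightarrow> \<sigma>"
      using bounded_imp_convergent_subsequence[OF bnd] by blast
    define t where "t = r \<circ> s"
    have t: "strict_mono t" unfolding t_def using r(1) s(1) by (rule strict_mono_o)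
    have Xt: "(\<lambda>j. X (t j)) \<longlonglongrightarrow> \<sigma>" using s(2) by (simp add: t_def o_def)
    have \<sigma>d: "density \<sigma>" by (rule density_closed[OF _ Xt]) (simp add: Xd)
    have Ecomp: "(\<lambda>j. E ((\<tau> ^^ m) (X (t j)))) \<longlonglongrightarrow> E ((\<tau> ^^ m) \<sigma>)" for m
      by (rule bounded_linear.tendsto[OF bl_energy bounded_linear.tendsto[OF bl_chan_pow Xt]])
    have lowb: "\<forall>n. E \<sigma> \<le> e n"
    proof
      fix n
      have "\<forall>j\<ge>n. e (t j) \<le> e n"
        using dec seq_suble[OF t] by (metis antimonoD le_trans)
      moreover have "(\<lambda>j. e (t j)) \<longlonglongrightarrow> E \<sigma>" using Ecomp[of 0] by (simp add: e_def)
      ultimately show "E \<sigma> \<le> e n" by (meson LIMSEQ_le_const2)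
    qed
    obtain L where L: "e \<longlonglongrightarrow> L" using decseq_convergent[OF dec lowb] by blast
    have Em: "E ((\<tau> ^^ m) \<sigma>) = L" for m
    proof -
      have sm: "strict_mono (\<lambda>j. t j + m)" using t by (simp add: strict_mono_def)
      have "(e \<circ> (\<lambda>j. t j + m)) \<longlonglongrightarrow> L" by (rule LIMSEQ_subseq_LIMSEQ[OF L sm])
      moreover have "e \<circ> (\<lambda>j. t j + m) = (\<lambda>j. E ((\<tau> ^^ m) (X (t j))))"
        by (simp add: fun_eq_iff e_def X_def funpow_add add.commute)
      ultimately show ?thesis using Ecomp[of m] LIMSEQ_unique by metis
    qed
    have "\<forall>m. E (\<tau> ((\<tau> ^^ m) \<sigma>)) = E ((\<tau> ^^ m) \<sigma>)"
    proof
      fix m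
      have "E (\<tau> ((\<tau> ^^ m) \<sigma>)) = E ((\<tau> ^^ Suc m) \<sigma>)" by simp
      then show "E (\<tau> ((\<tau> ^^ m) \<sigma>)) = E ((\<tau> ^^ m) \<sigma>)" using Em by metis
    qed
    then have "\<sigma> = sig \<nu>0" by (rule limit_char[OF ev0 un \<sigma>d])
    with Xt obtain no where "\<forall>n\<ge>no. dist (X (t n)) (sig \<nu>0) < \<epsilon>"
      using eps(1) unfolding lim_sequentially by blast
    moreover have "\<epsilon> \<le> dist (X (t no)) (sig \<nu>0)" using r(2) by (simp add: t_def)
    ultimately show False by force
  qed
  then show "(\<lambda>n. (\<tau> ^^ n) \<rho>) \<longlonglongrightarrow> sig \<nu>0" by (simp add: X_def[abs_def])
qed

lemma sig_apply: "sig \<nu> *v x = (of_real (1 / (norm \<nu>)^2) * cinner \<nu> x) *s \<nu>"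
  by (simp add: sig_def gram_mult)

lemma forward:
  assumes mix: "mixing \<tau>"
  shows "\<exists>\<nu>. is_eigenvector U (vkron \<nu> \<phi>) \<and>
            (\<forall>\<nu>'. is_eigenvector U (vkron \<nu>' \<phi>) \<longrightarrow> (\<exists>c. vkron \<nu>' \<phi> = c *s vkron \<nu> \<phi>))"
proof -
  obtain \<rho>s where rs: "density \<rho>s" "\<forall>\<rho>. density \<rho> \<longrightarrow> (\<lambda>n. (\<tau> ^^ n) \<rho>) \<longlonglongrightarrow> \<rho>s"
    using mix by (auto simp: mixing_def)
  have L: "(\<lambda>n. (\<tau> ^^ n) \<rho>s) \<longlonglongrightarrow> \<rho>s" using rs by blast
  have "(\<lambda>n. (\<tau> ^^ Suc n) \<rho>s) \<longlonglongrightarrow> \<rho>s" using LIMSEQ_Suc[OF L] .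
  moreover have "(\<lambda>n. (\<tau> ^^ Suc n) \<rho>s) \<longlonglongrightarrow> \<tau> \<rho>s"
    using bounded_linear.tendsto[OF bl_chan L] by simp
  ultimately have fixp: "\<tau> \<rho>s = \<rho>s" using LIMSEQ_unique by metis
  obtain \<nu> where nu: "is_eigenvector U (vkron \<nu> \<phi>)" using exists_eig[OF rs(1) fixp] by blast
  have sig_eq: "sig \<nu>' = \<rho>s" if ev: "is_eigenvector U (vkron \<nu>' \<phi>)" for \<nu>'
  proof -
    have nz: "\<nu>' \<noteq> 0" using ev by (auto simp: is_eigenvector_def)
    have it: "(\<tau> ^^ n) (sig \<nu>') = sig \<nu>'" for n by (induction n) (auto simp: fixed_eig[OF ev])
    have "(\<lambda>n. (\<tau> ^^ n) (sig \<nu>')) \<longlonglongrightarrow> \<rho>s" using rs(2) sig_density[OF nz] by blast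
    then show ?thesis by (simp add: it LIMSEQ_const_iff)
  qed
  have "\<exists>c. vkron \<nu>' \<phi> = c *s vkron \<nu> \<phi>" if ev': "is_eigenvector U (vkron \<nu>' \<phi>)" for \<nu>'
  proof -
    have nz: "\<nu>' \<noteq> 0" using ev' by (auto simp: is_eigenvector_def)
    have eq: "sig \<nu>' = sig \<nu>" using sig_eq[OF ev'] sig_eq[OF nu] by simp
    have "sig \<nu>' *v \<nu>' = \<nu>'"
      using nz by (simp add: sig_apply cinner_self power2_eq_square)
    then have "\<nu>' = (of_real (1 / (norm \<nu>)^2) * cinner \<nu> \<nu>') *s \<nu>"
      using eq by (simp add: sig_apply)
    then show ?thesis by (metis vkron_scale_left)
  qed
  with nu show ?thesis by blast
qed

theorem main_iff:
  "mixing \<tau> \<longleftrightarrow> (\<exists>\<nu>. is_eigenvector U (vkron \<nu> \<phi>) \<and>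
            (\<forall>\<nu>'. is_eigenvector U (vkron \<nu>' \<phi>) \<longrightarrow> (\<exists>c. vkron \<nu>' \<phi> = c *s vkron \<nu> \<phi>)))"
  using forward converse by blast

end



lemma herm_neg: "hermitian A \<Longrightarrow> hermitian (- A)"
  by (simp add: hermitian_def ctrans_def vec_eq_iff)

lemma kron_neg_left: "kron (- A) B = - kron A B"
  by (simp add: kron_def vec_eq_iff)
lemma kron_neg_right: "kron A (- B) = - kron A B"
  by (simp add: kron_def vec_eq_iff)
lemma mm_neg_left: "(- M) ** (U::complex^'n^'n) = - (M ** U)"
  by (simp add: matrix_matrix_mult_def vec_eq_iff sum_negf)
lemma mm_neg_right: "(U::complex^'n^'n) ** (- M) = - (U ** M)"
  by (simp add: matrix_matrix_mult_def vec_eq_iff sum_negf)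
lemma mv_neg: "(- M) *v (v::complex^'n) = - (M *v v)"
  by (simp add: matrix_vector_mult_def vec_eq_iff sum_negf)

theorem mainTheorem16:
  fixes MA :: "complex^'a::finite^'a" and MB :: "complex^'b::finite^'b"
    and U :: "complex^('a \<times> 'b)^('a \<times> 'b)"
    and \<phi> :: "complex^'b" and lam :: complex
  assumes "hermitian MA" and "hermitian MB"
    and "unitary U"
    and "(kron MA (mat 1) + kron (mat 1) MB) ** U = U ** (kron MA (mat 1) + kron (mat 1) MB)"
    and "norm \<phi> = 1" and "MB *v \<phi> = lam *s \<phi>"
    and "(\<forall>\<mu>. is_eigenvalue MB \<mu> \<longrightarrow> Re \<mu> \<le> Re lam) \<or> (\<forall>\<mu>. is_eigenvalue MB \<mu> \<longrightarrow> Re lam \<le> Re \<mu>)"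
    and "\<forall>v. MB *v v = lam *s v \<longrightarrow> (\<exists>c. v = c *s \<phi>)"
  shows "mixing (\<lambda>\<rho>. ptrace_B (U ** kron \<rho> (outer \<phi> \<phi>) ** ctrans U))
     \<longleftrightarrow> (\<exists>\<nu>. is_eigenvector U (vkron \<nu> \<phi>) \<and>
            (\<forall>\<nu>'. is_eigenvector U (vkron \<nu>' \<phi>) \<longrightarrow> (\<exists>c. vkron \<nu>' \<phi> = c *s vkron \<nu> \<phi>)))"
proof -
  have ch: "(\<lambda>\<rho>. ptrace_B (U ** kron \<rho> (outer \<phi> \<phi>) ** ctrans U)) = chan U \<phi>"
    by (simp add: chan_def fun_eq_iff)
  from assms(7) show ?thesis
  proof
    assume mx: "\<forall>\<mu>. is_eigenvalue MB \<mu> \<longrightarrow> Re \<mu> \<le> Re lam"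
    interpret S: setting "- MA" "- MB" U \<phi> "- lam"
    proof unfold_locales
      show "hermitian (- MA)" by (rule herm_neg[OF assms(1)])
      show "hermitian (- MB)" by (rule herm_neg[OF assms(2)])
      show "unitary U" by (rule assms(3))
      show "(kron (- MA) (mat 1) + kron (mat 1) (- MB)) ** U = U ** (kron (- MA) (mat 1) + kron (mat 1) (- MB))"
      proof -
        have e: "kron (- MA) (mat 1) + kron (mat 1) (- MB) = - (kron MA (mat 1) + kron (mat 1) MB)"
          by (simp add: kron_neg_left kron_neg_right)
        show ?thesis unfolding e mm_neg_left mm_neg_right using assms(4) by simp
      qed
      show "norm \<phi> = 1" by (rule assms(5))
      show "(- MB) *v \<phi> = (- lam) *s \<phi>" using assms(6) by (simp add: mv_neg)
      show "\<forall>\<mu>. is_eigenvalue (- MB) \<mu> \<longrightarrow> Re (- lam) \<le> Re \<mu>"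
      proof (intro allI impI)
        fix \<mu> assume "is_eigenvalue (- MB) \<mu>"
        then obtain v where "v \<noteq> 0" "(- MB) *v v = \<mu> *s v" by (auto simp: is_eigenvalue_def)
        then have "is_eigenvalue MB (- \<mu>)" unfolding is_eigenvalue_def
          by (intro exI[of _ v]) (simp add: mv_neg; metis minus_minus)
        then show "Re (- lam) \<le> Re \<mu>" using mx by fastforce
      qed
      show "\<forall>v. (- MB) *v v = (- lam) *s v \<longrightarrow> (\<exists>c. v = c *s \<phi>)"
        using assms(8) by (simp add: mv_neg)
    qed
    show ?thesis using S.main_iff ch by simp
  next
    assume mn: "\<forall>\<mu>. is_eigenvalue MB \<mu> \<longrightarrow> Re lam \<le> Re \<mu>"
    interpret S: setting MA MB U \<phi> lam
      by unfold_locales (use assms mn in auto)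
    show ?thesis using S.main_iff ch by simp
  qed
qed


end
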